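(* Let $n \geq 1$. The number of PC prographs of size $n$ whose canonical labelling assigns the labels $1, 2, \dots, n$ to the coproducts and the labels $n+1, \dots, 2n$ to the products equals the number of ordered pairs $(T_1, T_2)$ of binary trees with $n$ nodes each such that $dg(T_1) + dg(T_2) \leq n$. Equivalently, $$\sum_{d_1 + d_2 \leq n} C(n-1, d_1)\, C(n-1, d_2) = \binom{3n}{n} - 2\binom{3n}{n-1} + \binom{3n}{n-2},$$ and this common value is the number of such PC prographs.
   Context: A PC prograph of size $n$ is a finite connected directed acyclic graph embedded in the plane (up to isotopy), drawn so that all edges go upward, whose $2n$ vertices are $n$ coproducts (one incoming edge, two outgoing edges distinguished as left and right) and $n$ products (two incoming edges distinguished as left and right, one outgoing edge); exactly one coproduct has its incoming slot unconnected (global input, at the bottom) and exactly one product has its outgoing slot unconnected (global output, at the top); all other slots are joined by edges. Canonical labelling: maintain a left-to-right sequence of edges (the frontier), initially the global input edge alone. An unlabelled operator is available if all of its incoming edges lie in the frontier. At each step, among available operators choose the one whose leftmost incoming edge is leftmost in the frontier, give it the next label (starting from $1$), and replace its incoming edge(s) in the frontier by its outgoing edge(s) in left-to-right order; stop when all $2n$ operators are labelled. Binary trees: each node has a possibly empty left and right subtree; a tree with $n$ nodes has $n+1$ empty subtrees (leaves), ordered from left to right. For a binary tree $T$ with at least one node, let $v$ be the last node visited in preorder (root, then left subtree, then right subtree); $dg(T)$ is the number of leaves of $T$ lying to the left of $v$ (i.e. preceding the leaves of $v$). For integers $m, k \geq 0$, $C(m,k) = \binom{m+k}{k} - \binom{m+k}{k-1}$,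 with $\binom{a}{-1} = 0$; binomial coefficients with negative lower index are $0$. *)

theory Defs
  imports Main "HOL-Library.Tree"
begin

(* ---------- PC prographs, encoded combinatorially ----------
   Operators are the vertices V = {1..2n}; vertex 0 stands for the outside
   (the unconnected global input/output slots).  A slot is a pair (vertex, index);
   index 0 = left, 1 = right.  cop v says that v is a coproduct (otherwise a product).
   An edge is a pair (output slot of its source, input slot of its target).
   The global input edge is the edge leaving the outside slot (0,0); the
   global output edge is the edge entering the outside slot (0,0). *)

type_synonym slot = "nat \<times> nat"
type_synonym pedge = "slot \<times> slot"

definition verts :: "nat \<Rightarrow> nat set" where
  "verts n = {1..2*n}"

definition outSlot :: "nat \<Rightarrow> (nat \<Rightarrow> bool) \<Rightarrow> slot \<Rightarrow> bool" where
  "outSlot n cop s = ((fst s = 0 \<and> snd s = 0) \<or>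
     (fst s \<in> verts n \<and> (if cop (fst s) then snd s < 2 else snd s = 0)))"

definition inSlot :: "nat \<Rightarrow> (nat \<Rightarrow> bool) \<Rightarrow> slot \<Rightarrow> bool" where
  "inSlot n cop s = ((fst s = 0 \<and> snd s = 0) \<or>
     (fst s \<in> verts n \<and> (if cop (fst s) then snd s = 0 else snd s < 2)))"

definition outEdge :: "pedge set \<Rightarrow> nat \<Rightarrow> nat \<Rightarrow> pedge" where
  "outEdge E v i = (THE e. e \<in> E \<and> fst e = (v, i))"

definition inEdge :: "pedge set \<Rightarrow> nat \<Rightarrow> nat \<Rightarrow> pedge" where
  "inEdge E v j = (THE e. e \<in> E \<and> snd e = (v, j))"

definition ins :: "(nat \<Rightarrow> bool) \<Rightarrow> pedge set \<Rightarrow> nat \<Rightarrow> pedge list" where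
  "ins cop E v = (if cop v then [inEdge E v 0] else [inEdge E v 0, inEdge E v 1])"

definition outs :: "(nat \<Rightarrow> bool) \<Rightarrow> pedge set \<Rightarrow> nat \<Rightarrow> pedge list" where
  "outs cop E v = (if cop v then [outEdge E v 0, outEdge E v 1] else [outEdge E v 0])"

definition globalIn :: "pedge set \<Rightarrow> pedge" where
  "globalIn E = outEdge E 0 0"

definition globalOut :: "pedge set \<Rightarrow> pedge" where
  "globalOut E = inEdge E 0 0"

definition adj :: "nat \<Rightarrow> pedge set \<Rightarrow> (nat \<times> nat) set" where
  "adj n E = {(fst (fst e), fst (snd e)) | e. e \<in> E \<and> fst (fst e) \<in> verts n \<and> fst (snd e) \<in> verts n}"

text \<open>Upward planar drawing: sweeping a horizontal line upward, the frontier
  (left-to-right sequence of crossed edges) changes one operator at a time, the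
  incoming edges of that operator being consecutive in the frontier in slot order
  and being replaced by its outgoing edges in slot order.\<close>
inductive sweeps :: "(nat \<Rightarrow> bool) \<Rightarrow> pedge set \<Rightarrow> pedge list \<Rightarrow> nat list \<Rightarrow> pedge list \<Rightarrow> bool"
  for cop E where
  sweeps_Nil: "sweeps cop E F [] F"
| sweeps_Cons: "sweeps cop E (A @ outs cop E v @ B) vs G \<Longrightarrow> sweeps cop E (A @ ins cop E v @ B) (v # vs) G"

definition upward_planar :: "nat \<Rightarrow> (nat \<Rightarrow> bool) \<Rightarrow> pedge set \<Rightarrow> bool" where
  "upward_planar n cop E = (\<exists>vs. distinct vs \<and> set vs = verts n \<and>
      sweeps cop E [globalIn E] vs [globalOut E])"

definition is_PC_prograph :: "nat \<Rightarrow> (nat \<Rightarrow> bool) \<Rightarrow> pedge set \<Rightarrow> bool" where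
  "is_PC_prograph n cop E = (
     card {v \<in> verts n. cop v} = n \<and>
     (\<forall>e\<in>E. outSlot n cop (fst e) \<and> inSlot n cop (snd e)) \<and>
     (\<forall>s. outSlot n cop s \<longrightarrow> (\<exists>!e. e \<in> E \<and> fst e = s)) \<and>
     (\<forall>s. inSlot n cop s \<longrightarrow> (\<exists>!e. e \<in> E \<and> snd e = s)) \<and>
     (fst (snd (globalIn E)) \<in> verts n \<and> cop (fst (snd (globalIn E)))) \<and>
     (fst (fst (globalOut E)) \<in> verts n \<and> \<not> cop (fst (fst (globalOut E)))) \<and>
     acyclic (adj n E) \<and>
     (\<forall>u\<in>verts n. \<forall>w\<in>verts n. (u, w) \<in> (adj n E \<union> (adj n E)\<inverse>)\<^sup>*) \<and>
     upward_planar n cop E)"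

definition pos :: "'a \<Rightarrow> 'a list \<Rightarrow> nat" where
  "pos x xs = (LEAST i. i < length xs \<and> xs ! i = x)"

definition frontier_step :: "(nat \<Rightarrow> bool) \<Rightarrow> pedge set \<Rightarrow> pedge list \<Rightarrow> nat \<Rightarrow> pedge list" where
  "frontier_step cop E F v =
     (let i = Min ((\<lambda>e. pos e F) ` set (ins cop E v))
      in take i F @ outs cop E v @ drop (i + length (ins cop E v)) F)"

fun frontier :: "(nat \<Rightarrow> bool) \<Rightarrow> pedge set \<Rightarrow> nat \<Rightarrow> pedge list" where
  "frontier cop E 0 = [globalIn E]"
| "frontier cop E (Suc k) = frontier_step cop E (frontier cop E k) (Suc k)"

definition available :: "nat \<Rightarrow> (nat \<Rightarrow> bool) \<Rightarrow> pedge set \<Rightarrow> nat \<Rightarrow> nat \<Rightarrow> bool" where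
  "available n cop E k w = (w \<in> verts n \<and> k < w \<and> set (ins cop E w) \<subseteq> set (frontier cop E k))"

definition leftpos :: "(nat \<Rightarrow> bool) \<Rightarrow> pedge set \<Rightarrow> pedge list \<Rightarrow> nat \<Rightarrow> nat" where
  "leftpos cop E F w = Min ((\<lambda>e. pos e F) ` set (ins cop E w))"

text \<open>The canonical labelling of the prograph assigns label k to operator k,
  for every k (i.e. the labels of the encoding ARE the canonical labels).\<close>
definition canonically_labelled :: "nat \<Rightarrow> (nat \<Rightarrow> bool) \<Rightarrow> pedge set \<Rightarrow> bool" where
  "canonically_labelled n cop E = (\<forall>k < 2*n.
      available n cop E k (Suc k) \<and>
      (\<forall>w. available n cop E k w \<and> w \<noteq> Suc k \<longrightarrow>
          leftpos cop E (frontier cop E k) (Suc k) < leftpos cop E (frontier cop E k) w))"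

definition PC_coprod_first :: "nat \<Rightarrow> pedge set set" where
  "PC_coprod_first n = {E. is_PC_prograph n (\<lambda>v. v \<le> n) E \<and> canonically_labelled n (\<lambda>v. v \<le> n) E}"

text \<open>dg T: number of leaves strictly left of the last node in preorder.
  Leaves of Node l r are the leaves of l followed by those of r.\<close>
fun dg :: "unit tree \<Rightarrow> nat" where
  "dg Leaf = 0"
| "dg (Node l _ r) = (if r \<noteq> Leaf then size l + 1 + dg r else if l \<noteq> Leaf then dg l else 0)"

definition Cb :: "nat \<Rightarrow> nat \<Rightarrow> int" where
  "Cb m k = int ((m + k) choose k) - (if k = 0 then 0 else int ((m + k) choose (k - 1)))"

end

theory Submission
  imports Defs "HOL-Computational_Algebra.Formal_Power_Series"
begin

lemma neg_gchoose_aux: "real ((m + k) choose k) = (-1)^k * ((- real (m + 1)) gchoose k)"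
proof -
  have "((- real (m + 1)) gchoose k) = (-1)^k * ((real (m+1) + real k - 1) gchoose k)"
    by (rule gbinomial_minus)
  also have "real (m+1) + real k - 1 = real (m + k)" by simp
  finally have "((- real (m + 1)) gchoose k) = (-1)^k * real ((m + k) choose k)"
    by (simp add: binomial_gbinomial)
  then show ?thesis by (simp add: power_mult_distrib[symmetric] flip: power_add mult.assoc)
qed

lemma upper_vandermonde_real:
  "(\<Sum>k\<le>N. real ((a + k) choose k) * real ((c + (N - k)) choose (N - k))) = real ((a + c + N + 1) choose N)"
proof -
  have "(\<Sum>k\<le>N. real ((a + k) choose k) * real ((c + (N - k)) choose (N - k)))
      = (\<Sum>k\<le>N. (-1)^N * (((- real (a + 1)) gchoose k) * ((- real (c + 1)) gchoose (N - k))))"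
  proof (rule sum.cong)
    fix k assume "k \<in> {..N}"
    then have "(-1::real)^k * (-1)^(N-k) = (-1)^N" by (simp flip: power_add)
    then show "real ((a + k) choose k) * real ((c + (N - k)) choose (N - k)) =
        (-1)^N * (((- real (a + 1)) gchoose k) * ((- real (c + 1)) gchoose (N - k)))"
      by (simp only: neg_gchoose_aux) (metis (no_types, lifting) mult.assoc mult.left_commute)
  qed simp
  also have "\<dots> = (-1)^N * ((- real (a + 1) + - real (c+1)) gchoose N)"
    using gbinomial_Vandermonde[of "- real (a + 1)" "- real (c+1)" N]
    by (subst sum_distrib_left[symmetric]) (simp add: atLeast0AtMost)
  also have "(- real (a + 1) + - real (c+1)) = - real ((a + c + 1) + 1)" by simp
  also have "(-1)^N * ((- real ((a + c + 1) + 1)) gchoose N) = real ((a + c + N + 1) choose N)"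
  proof -
    have e: "real ((a + c + 1 + N) choose N) = (-1)^N * ((- real ((a + c + 1) + 1)) gchoose N)"
      by (rule neg_gchoose_aux)
    have m: "(-1::real)^N * (-1)^N = 1" by (induct N) auto
    have "(-1)^N * real ((a + c + 1 + N) choose N) = ((- real ((a + c + 1) + 1)) gchoose N)"
      by (simp only: e mult.assoc[symmetric] m)
    then show ?thesis using m by (metis add.commute add.left_commute mult.assoc mult_1)
  qed
  finally show ?thesis .
qed


lemma upper_vandermonde:
  "(\<Sum>k\<le>N. ((a + k) choose k) * ((c + (N - k)) choose (N - k))) = ((a + c + N + 1) choose N)"
proof -
  have "real (\<Sum>k\<le>N. ((a + k) choose k) * ((c + (N - k)) choose (N - k))) = real ((a + c + N + 1) choose N)"
    unfolding of_nat_sum of_nat_mult by (rule upper_vandermonde_real)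
  then show ?thesis by (simp only: of_nat_eq_iff)
qed

definition Xb :: "nat \<Rightarrow> nat \<Rightarrow> int" where "Xb a k = int ((a + k) choose k)"
definition Yb :: "nat \<Rightarrow> nat \<Rightarrow> int" where "Yb a k = (if k = 0 then 0 else Xb (a + 1) (k - 1))"

lemma Cb_XY: "Cb a k = Xb a k - Yb a k"
  by (cases k) (simp_all add: Cb_def Xb_def Yb_def)

lemma UV_int: "(\<Sum>k\<le>N. Xb a k * Xb c (N - k)) = int ((a + c + N + 1) choose N)"
proof -
  have "(\<Sum>k\<le>N. Xb a k * Xb c (N - k)) = int (\<Sum>k\<le>N. ((a + k) choose k) * ((c + (N - k)) choose (N - k)))"
    by (simp only: Xb_def of_nat_mult of_nat_sum)
  then show ?thesis by (simp only: upper_vandermonde)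
qed

lemma sum_YX: "(\<Sum>k\<le>Suc N. Yb a k * Xb c (Suc N - k)) = int ((a + c + Suc N + 1) choose N)"
proof -
  have "(\<Sum>k\<le>Suc N. Yb a k * Xb c (Suc N - k)) = (\<Sum>k\<le>N. Xb (a+1) k * Xb c (N - k))"
    by (simp only: sum.atMost_Suc_shift) (simp add: Yb_def)
  also have "\<dots> = int ((a + c + Suc N + 1) choose N)" by (simp add: UV_int)
  finally show ?thesis .
qed

lemma sum_XY: "(\<Sum>k\<le>Suc N. Xb a k * Yb c (Suc N - k)) = int ((a + c + Suc N + 1) choose N)"
proof -
  have "(\<Sum>k\<le>Suc N. Xb a k * Yb c (Suc N - k)) = (\<Sum>k\<le>N. Xb a k * Xb (c+1) (N - k))"
  proof -
    have "(\<Sum>k\<le>Suc N. Xb a k * Yb c (Suc N - k)) = (\<Sum>k\<le>N. Xb a k * Yb c (Suc N - k))"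
      by (simp add: Yb_def)
    also have "\<dots> = (\<Sum>k\<le>N. Xb a k * Xb (c+1) (N - k))"
      by (rule sum.cong) (auto simp: Yb_def Suc_diff_le)
    finally show ?thesis .
  qed
  also have "\<dots> = int ((a + c + Suc N + 1) choose N)" by (simp add: UV_int)
  finally show ?thesis .
qed

lemma sum_YY: "(\<Sum>k\<le>Suc (Suc N). Yb a k * Yb c (Suc (Suc N) - k)) = int ((a + c + Suc (Suc N) + 1) choose N)"
proof -
  have "(\<Sum>k\<le>Suc (Suc N). Yb a k * Yb c (Suc (Suc N) - k)) = (\<Sum>k\<le>Suc N. Xb (a+1) k * Yb c (Suc N - k))"
    by (simp only: sum.atMost_Suc_shift) (simp add: Yb_def)
  also have "\<dots> = int ((a + c + Suc (Suc N) + 1) choose N)" using sum_XY[of "a+1" c N] by simp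
  finally show ?thesis .
qed

lemma sum_YX0: "(\<Sum>k\<le>0. Yb a k * Xb c (0 - k)) = 0" by (simp add: Yb_def)
lemma sum_XY0: "(\<Sum>k\<le>0. Xb a k * Yb c (0 - k)) = 0" by (simp add: Yb_def)
lemma sum_YY1: "(\<Sum>k\<le>Suc 0. Yb a k * Yb c (Suc 0 - k)) = 0" by (simp add: Yb_def)
lemma sum_YY0: "(\<Sum>k\<le>0. Yb a k * Yb c (0 - k)) = 0" by (simp add: Yb_def)

lemma Cb_conv:
  "(\<Sum>k\<le>N. Cb a k * Cb c (N - k)) =
     int ((a+c+N+1) choose N) - 2 * (if N \<ge> 1 then int ((a+c+N+1) choose (N - 1)) else 0)
     + (if N \<ge> 2 then int ((a+c+N+1) choose (N - 2)) else 0)"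
proof -
  have eq: "(\<Sum>k\<le>N. Cb a k * Cb c (N - k)) =
     (\<Sum>k\<le>N. Xb a k * Xb c (N - k)) - (\<Sum>k\<le>N. Yb a k * Xb c (N - k))
     - (\<Sum>k\<le>N. Xb a k * Yb c (N - k)) + (\<Sum>k\<le>N. Yb a k * Yb c (N - k))"
    by (simp add: Cb_XY algebra_simps sum.distrib sum_subtractf)
  moreover consider "N = 0" | "N = 1" | N' where "N = Suc (Suc N')"
    by (metis One_nat_def not0_implies_Suc)
  then show ?thesis
  proof cases
    case 1 then show ?thesis using eq by (simp add: Yb_def Xb_def)
  next
    case 2 then show ?thesis using eq
      by (simp add: UV_int sum_YX[of a c 0, simplified] sum_XY[of a c 0, simplified] sum_YY1 Yb_def Xb_def)
  next
    case 3 then show ?thesis using eq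
      using UV_int[of a c N] sum_YX[of a c "Suc N'"] sum_XY[of a c "Suc N'"] sum_YY[of a c N']
      by simp
  qed
qed

lemma Cb_partial: "(\<Sum>k\<le>d. Cb m k) = Cb (Suc m) d"
proof (induction d)
  case 0 then show ?case by (simp add: Cb_def)
next
  case (Suc d)
  have "Cb (Suc m) (Suc d) = Cb (Suc m) d + Cb m (Suc d)"
  proof (cases d)
    case 0 then show ?thesis by (simp add: Cb_def)
  next
    case (Suc d')
    then show ?thesis by (simp add: Cb_def)
  qed
  then show ?case using Suc by simp
qed

lemma pairs_Sigma: "{(d1 :: nat, d2 :: nat). d1 + d2 \<le> n} = Sigma {..n} (\<lambda>d1. {..n - d1})"
  by auto

lemma pair_sum_iter:
  "(\<Sum>(d1, d2) \<in> {(d1 :: nat, d2 :: nat). d1 + d2 \<le> n}. f d1 d2) = (\<Sum>d1\<le>n. \<Sum>d2\<le>n - d1. f d1 d2)"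
  unfolding pairs_Sigma by (simp add: sum.Sigma)

lemma partC:
  assumes "n \<ge> 1"
  shows "(\<Sum>(d1, d2) \<in> {(d1 :: nat, d2 :: nat). d1 + d2 \<le> n}. Cb (n - 1) d1 * Cb (n - 1) d2)
           = int ((3*n) choose n) - 2 * int ((3*n) choose (n - 1))
             + (if n \<ge> 2 then int ((3*n) choose (n - 2)) else 0)"
proof -
  have "(\<Sum>(d1, d2) \<in> {(d1 :: nat, d2 :: nat). d1 + d2 \<le> n}. Cb (n - 1) d1 * Cb (n - 1) d2)
     = (\<Sum>d1\<le>n. Cb (n - 1) d1 * (\<Sum>d2\<le>n - d1. Cb (n - 1) d2))"
    by (simp add: pair_sum_iter sum_distrib_left)
  also have "\<dots> = (\<Sum>d1\<le>n. Cb (n - 1) d1 * Cb n (n - d1))"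
    using assms by (simp add: Cb_partial)
  also have "\<dots> = int ((3*n) choose n) - 2 * int ((3*n) choose (n - 1))
             + (if n \<ge> 2 then int ((3*n) choose (n - 2)) else 0)"
  proof -
    have e: "n - 1 + n + n + 1 = 3 * n" using assms by simp
    show ?thesis using Cb_conv[of "n - 1" n n] assms unfolding e by simp
  qed
  finally show ?thesis .
qed

lemma card_pairs:
  fixes f :: "'a \<Rightarrow> nat" and g :: "'b \<Rightarrow> nat"
  assumes "finite X" "finite Y"
  shows "card {(x, y). x \<in> X \<and> y \<in> Y \<and> f x + g y \<le> n}
     = (\<Sum>(d1, d2) \<in> {(d1 :: nat, d2 :: nat). d1 + d2 \<le> n}. card {x\<in>X. f x = d1} * card {y\<in>Y. g y = d2})"
proof -
  let ?D = "{(d1 :: nat, d2 :: nat). d1 + d2 \<le> n}"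
  have fD: "finite ?D" unfolding pairs_Sigma by auto
  have eq: "{(x, y). x \<in> X \<and> y \<in> Y \<and> f x + g y \<le> n}
      = (\<Union>d\<in>?D. {x\<in>X. f x = fst d} \<times> {y\<in>Y. g y = snd d})"
    by auto
  have "card (\<Union>d\<in>?D. {x\<in>X. f x = fst d} \<times> {y\<in>Y. g y = snd d})
      = (\<Sum>d\<in>?D. card ({x\<in>X. f x = fst d} \<times> {y\<in>Y. g y = snd d}))"
    by (rule card_UN_disjoint) (use fD assms in auto)
  also have "\<dots> = (\<Sum>d\<in>?D. card {x\<in>X. f x = fst d} * card {y\<in>Y. g y = snd d})"
    by (simp add: card_cartesian_product)
  finally show ?thesis unfolding eq by (simp add: case_prod_beta)
qed


lemma count_rec:
  fixes N :: "nat \<Rightarrow> nat \<Rightarrow> nat"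
  assumes b0: "N (Suc 0) 0 = 1" and b1: "\<And>i. i > 0 \<Longrightarrow> N (Suc 0) i = 0"
    and rec: "\<And>n i. n \<ge> 1 \<Longrightarrow> i \<le> n \<Longrightarrow> N (Suc n) i = (\<Sum>d\<le>i. N n d)"
    and z: "\<And>n i. n \<ge> 1 \<Longrightarrow> i > n \<Longrightarrow> N (Suc n) i = 0"
    and cp: "\<And>m k. (\<Sum>j\<le>k. Cb m j) = Cb (Suc m) k"
  shows "d \<le> Suc n \<Longrightarrow> int (N (Suc n) d) = Cb n d"
proof (induction n arbitrary: d)
  case 0
  then consider "d = 0" | "d = 1" by linarith
  then show ?case
    by cases (simp_all add: b0 b1 Cb_def)
next
  case (Suc n)
  show ?case
  proof (cases "d \<le> Suc n")
    case True
    have "int (N (Suc (Suc n)) d) = (\<Sum>j\<le>d. int (N (Suc n) j))"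
      using rec[of "Suc n" d] True by simp
    also have "\<dots> = (\<Sum>j\<le>d. Cb n j)"
      using Suc.IH True by (intro sum.cong) auto
    also have "\<dots> = Cb (Suc n) d" by (rule cp)
    finally show ?thesis .
  next
    case False
    then have d: "d = Suc (Suc n)" using Suc.prems by simp
    have "(Suc n + Suc (Suc n)) choose Suc (Suc n) = (Suc n + Suc (Suc n)) choose Suc n"
      using binomial_symmetric[of "Suc (Suc n)" "Suc n + Suc (Suc n)"] by simp
    then show ?thesis using z[of "Suc n" d] d by (simp add: Cb_def)
  qed
qed

fun ins_leaf :: "nat \<Rightarrow> unit tree \<Rightarrow> unit tree" where
  "ins_leaf i Leaf = Node Leaf () Leaf"
| "ins_leaf i (Node l u r) = (if i \<le> size l then Node (ins_leaf i l) u r else Node l u (ins_leaf (i - Suc (size l)) r))"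

fun rem_last :: "unit tree \<Rightarrow> unit tree" where
  "rem_last Leaf = Leaf"
| "rem_last (Node l u r) = (if r \<noteq> Leaf then Node l u (rem_last r) else if l \<noteq> Leaf then Node (rem_last l) u Leaf else Leaf)"

lemma size_ins_leaf[simp]: "size (ins_leaf i t) = Suc (size t)"
  by (induction i t rule: ins_leaf.induct) auto

lemma ins_leaf_neq[simp]: "ins_leaf i t \<noteq> Leaf"
  by (cases t) auto

lemma ins_leaf_neq'[simp]: "Leaf \<noteq> ins_leaf i t"
  by (cases t) auto

lemma size_pos: "t \<noteq> Leaf \<Longrightarrow> 0 < size t"
  by (cases t) auto

lemma dg_le: "t \<noteq> Leaf \<Longrightarrow> dg t < size t"
  by (induction t rule: dg.induct) (auto split: if_splits)

lemma dg_ins_leaf: "dg t \<le> i \<Longrightarrow> i \<le> size t \<Longrightarrow> dg (ins_leaf i t) = i"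
proof (induction i t rule: ins_leaf.induct)
  case (1 i)
  then show ?case by simp
next
  case (2 i l u r)
  show ?case
  proof (cases "i \<le> size l")
    case True
    then have rL: "r = Leaf" using 2(3) by (auto split: if_splits)
    show ?thesis
    proof (cases "l = Leaf")
      case True
      then show ?thesis using rL 2 by simp
    next
      case False
      then have "dg l \<le> i" using 2(3) rL by simp
      then show ?thesis using 2(1)[OF True] rL True False by simp
    qed
  next
    case False
    have a: "i - Suc (size l) \<le> size r" using 2(4) False by simp
    have b: "dg r \<le> i - Suc (size l)" using 2(3) False by (cases "r = Leaf") auto
    show ?thesis using 2(2)[OF False b a] False by simp
  qed
qed

lemma size_rem_last: "size (rem_last t) = size t - 1"
  by (induction t rule: rem_last.induct) (auto dest: size_pos)

lemma ins_rem_last: "t \<noteq> Leaf \<Longrightarrow> ins_leaf (dg t) (rem_last t) = t"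
proof (induction t rule: rem_last.induct)
  case 1
  then show ?case by simp
next
  case (2 l u r)
  show ?case
  proof (cases "r = Leaf")
    case False
    then show ?thesis using 2 by (simp add: size_rem_last)
  next
    case rL: True
    show ?thesis
    proof (cases "l = Leaf")
      case True then show ?thesis using rL by simp
    next
      case False
      have "dg l \<le> size (rem_last l)" using dg_le[OF False] by (simp add: size_rem_last)
      then show ?thesis using 2 rL False by simp
    qed
  qed
qed

lemma dg_rem_last: "dg (rem_last t) \<le> dg t"
proof (induction t rule: rem_last.induct)
  case 1
  then show ?case by simp
next
  case (2 l u r)
  show ?case
  proof (cases "r = Leaf")
    case False
    have "dg l \<le> size l" by (cases "l = Leaf") (auto dest: dg_le)
    then show ?thesis using 2 False by auto
  next
    case True
    then show ?thesis using 2 by auto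
  qed
qed

lemma ins_leaf_inj: "ins_leaf i t = ins_leaf i t' \<Longrightarrow> t = t'"
proof (induction i t arbitrary: t' rule: ins_leaf.induct)
  case (1 i)
  then show ?case by (cases t') (auto split: if_splits)
next
  case (2 i l u r)
  show ?case
  proof (cases t')
    case Leaf
    then show ?thesis using 2(3) by (auto split: if_splits)
  next
    case (Node l' u' r')
    then show ?thesis using 2 by (auto split: if_splits)
  qed
qed

lemma finite_trees_le: "finite {t :: unit tree. size t \<le> n}"
proof (induction n)
  case 0
  then show ?case by (simp add: eq_0_size)
next
  case (Suc n)
  have "{t :: unit tree. size t \<le> Suc n} \<subseteq> {Leaf} \<union> (\<lambda>(l, r). Node l () r) ` ({t. size t \<le> n} \<times> {t. size t \<le> n})"
  proof
    fix t :: "unit tree" assume "t \<in> {t. size t \<le> Suc n}"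
    then show "t \<in> {Leaf} \<union> (\<lambda>(l, r). Node l () r) ` ({t. size t \<le> n} \<times> {t. size t \<le> n})"
      by (cases t) force+
  qed
  moreover have "finite ({Leaf} \<union> (\<lambda>(l, r). Node l () r) ` ({t :: unit tree. size t \<le> n} \<times> {t. size t \<le> n}))"
    using Suc by simp
  ultimately show ?case by (rule finite_subset)
qed

lemma finite_trees: "finite {t :: unit tree. size t = n}"
  by (rule finite_subset[OF _ finite_trees_le[of n]]) auto

definition Nt :: "nat \<Rightarrow> nat \<Rightarrow> nat" where
  "Nt n d = card {t :: unit tree. size t = n \<and> dg t = d}"

lemma trees_rec_set:
  assumes "i \<le> n"
  shows "{t :: unit tree. size t = Suc n \<and> dg t = i} = ins_leaf i ` {t. size t = n \<and> dg t \<le> i}"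
proof
  show "ins_leaf i ` {t. size t = n \<and> dg t \<le> i} \<subseteq> {t. size t = Suc n \<and> dg t = i}"
    using assms by (auto simp: dg_ins_leaf)
next
  show "{t. size t = Suc n \<and> dg t = i} \<subseteq> ins_leaf i ` {t. size t = n \<and> dg t \<le> i}"
  proof
    fix t :: "unit tree" assume t: "t \<in> {t. size t = Suc n \<and> dg t = i}"
    then have nl: "t \<noteq> Leaf" by auto
    have "t = ins_leaf i (rem_last t)" using ins_rem_last[OF nl] t by simp
    moreover have "rem_last t \<in> {t. size t = n \<and> dg t \<le> i}"
      using t dg_rem_last[of t] by (simp add: size_rem_last)
    ultimately show "t \<in> ins_leaf i ` {t. size t = n \<and> dg t \<le> i}" by blast
  qed
qed

lemma Nt_rec: "i \<le> n \<Longrightarrow> Nt (Suc n) i = (\<Sum>d\<le>i. Nt n d)"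
proof -
  assume i: "i \<le> n"
  have "Nt (Suc n) i = card {t :: unit tree. size t = n \<and> dg t \<le> i}"
    unfolding Nt_def trees_rec_set[OF i]
    by (rule card_image) (auto intro: inj_onI ins_leaf_inj)
  also have "{t :: unit tree. size t = n \<and> dg t \<le> i} = (\<Union>d\<in>{..i}. {t. size t = n \<and> dg t = d})"
    by auto
  also have "card \<dots> = (\<Sum>d\<le>i. Nt n d)"
    unfolding Nt_def
    by (rule card_UN_disjoint) (auto intro: finite_subset[OF _ finite_trees[of n]])
  finally show ?thesis .
qed

lemma Nt_zero: "i > n \<Longrightarrow> Nt (Suc n) i = 0"
proof -
  assume "i > n"
  have "False" if "size t = Suc n" "dg t = i" for t :: "unit tree"
  proof -
    have "t \<noteq> Leaf" using that by auto
    then show False using dg_le[of t] that \<open>i > n\<close> by simp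
  qed
  then have "{t :: unit tree. size t = Suc n \<and> dg t = i} = {}"
    by blast
  then show ?thesis unfolding Nt_def by (simp only: card.empty)
qed

lemma Nt_Cb: "d \<le> Suc n \<Longrightarrow> int (Nt (Suc n) d) = Cb n d"
proof (rule count_rec[where N = Nt])
  have e: "{t :: unit tree. t = Leaf \<and> dg t = 0} = {Leaf}" by auto
  show "Nt (Suc 0) 0 = 1" using Nt_rec[of 0 0] by (simp add: Nt_def e)
  show "Nt (Suc 0) i = 0" if "i > 0" for i using Nt_zero that by simp
  show "Nt (Suc n) i = (\<Sum>d\<le>i. Nt n d)" if "n \<ge> 1" "i \<le> n" for n i using Nt_rec that by simp
  show "Nt (Suc n) i = 0" if "n \<ge> 1" "i > n" for n i using Nt_zero that by simp
  show "(\<Sum>j\<le>k. Cb m j) = Cb (Suc m) k" for m k by (rule Cb_partial)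
qed


lemma list_split_disj:
  assumes "A @ Xo @ B = A' @ Yi @ B'" "set Yi \<inter> set Xo = {}" "Xo \<noteq> []" "Yi \<noteq> []"
  shows "(\<exists>M. A = A' @ Yi @ M \<and> B' = M @ Xo @ B) \<or> (\<exists>M. A' = A @ Xo @ M \<and> B = M @ Yi @ B')"
proof -
  from append_eq_append_conv2[THEN iffD1, OF assms(1)] obtain us where
    c: "(A = A' @ us \<and> us @ Xo @ B = Yi @ B') \<or> (A @ us = A' \<and> Xo @ B = us @ Yi @ B')"
    by blast
  then show ?thesis
  proof
    assume h: "A = A' @ us \<and> us @ Xo @ B = Yi @ B'"
    from append_eq_append_conv2[THEN iffD1, of us "Xo @ B" Yi B'] h obtain vs where
      c2: "(us = Yi @ vs \<and> vs @ Xo @ B = B') \<or> (us @ vs = Yi \<and> Xo @ B = vs @ B')"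
      by blast
    then show ?thesis
    proof
      assume "us = Yi @ vs \<and> vs @ Xo @ B = B'"
      then show ?thesis using h by auto
    next
      assume h2: "us @ vs = Yi \<and> Xo @ B = vs @ B'"
      show ?thesis
      proof (cases vs)
        case Nil
        then show ?thesis using h h2 by auto
      next
        case (Cons x xs)
        then have "hd Xo = x" using h2 assms(3) by (cases Xo) auto
        then have "x \<in> set Xo" "x \<in> set Yi" using assms(3) h2 Cons by auto
        then show ?thesis using assms(2) by auto
      qed
    qed
  next
    assume h: "A @ us = A' \<and> Xo @ B = us @ Yi @ B'"
    show ?thesis
    proof (cases us)
      case Nil
      then have "hd Xo = hd Yi" using h assms(3,4) by (cases Xo; cases Yi) auto
      then have "hd Yi \<in> set Xo" "hd Yi \<in> set Yi" using assms(3,4) by (metis hd_in_set)+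
      then show ?thesis using assms(2) by auto
    next
      case (Cons x xs)
      from append_eq_append_conv2[THEN iffD1, of Xo B us "Yi @ B'"] h obtain ws where
        c2: "(Xo = us @ ws \<and> ws @ B = Yi @ B') \<or> (Xo @ ws = us \<and> B = ws @ Yi @ B')"
        by blast
      then show ?thesis
      proof
        assume h2: "Xo = us @ ws \<and> ws @ B = Yi @ B'"
        show ?thesis
        proof (cases ws)
          case Nil
          then show ?thesis using h h2 by auto
        next
          case (Cons y ys)
          then have "hd Yi = y" using h2 assms(4) by (cases Yi) auto
          then have "y \<in> set Xo" "y \<in> set Yi" using assms(4) h2 Cons by auto
          then show ?thesis using assms(2) by auto
        qed
      next
        assume "Xo @ ws = us \<and> B = ws @ Yi @ B'"
        then show ?thesis using h by auto
      qed
    qed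
  qed
qed

lemma sweeps_commute:
  assumes "sweeps cop E F vs G"
    and wf: "\<And>u. u \<in> V \<Longrightarrow> ins cop E u \<noteq> [] \<and> outs cop E u \<noteq> [] \<and> (\<forall>e\<in>set (outs cop E u). fst (fst e) = u)"
    and disj: "\<And>u w. u \<in> V \<Longrightarrow> w \<in> V \<Longrightarrow> u \<noteq> w \<Longrightarrow> set (ins cop E u) \<inter> set (ins cop E w) = {}"
  shows "set vs \<subseteq> V \<Longrightarrow> v \<in> set vs \<Longrightarrow> distinct vs \<Longrightarrow> set (ins cop E v) \<subseteq> set F \<Longrightarrow>
         (\<forall>e\<in>set F. fst (fst e) \<notin> set vs) \<Longrightarrow>
         \<exists>A B. F = A @ ins cop E v @ B \<and> sweeps cop E (A @ outs cop E v @ B) (remove1 v vs) G"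
  using assms(1)
proof (induction rule: sweeps.induct)
  case (sweeps_Nil F)
  then show ?case by simp
next
  case (sweeps_Cons A u B vs G)
  show ?case
  proof (cases "v = u")
    case True
    then show ?thesis using sweeps_Cons by auto
  next
    case False
    have uV: "u \<in> V" and vV: "v \<in> V" using sweeps_Cons.prems by auto
    have v': "v \<in> set vs" using sweeps_Cons.prems False by auto
    have dvs: "distinct vs" "u \<notin> set vs" using sweeps_Cons.prems by auto
    have d1: "set (ins cop E v) \<inter> set (ins cop E u) = {}" using disj[OF vV uV False] .
    have insv: "set (ins cop E v) \<subseteq> set (A @ outs cop E u @ B)"
      using sweeps_Cons.prems(4) d1 by auto
    have srcs: "\<forall>e\<in>set (A @ outs cop E u @ B). fst (fst e) \<notin> set vs"
      using sweeps_Cons.prems(5) wf[OF uV] dvs by auto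
    obtain A' B' where AB': "A @ outs cop E u @ B = A' @ ins cop E v @ B'"
      and sw: "sweeps cop E (A' @ outs cop E v @ B') (remove1 v vs) G"
      using sweeps_Cons.IH[OF _ v' dvs(1) insv srcs] sweeps_Cons.prems(1) by auto
    have d2: "set (ins cop E v) \<inter> set (outs cop E u) = {}"
    proof -
      have "\<forall>e\<in>set (ins cop E v). fst (fst e) \<noteq> u"
        using sweeps_Cons.prems(4,5) by auto
      then show ?thesis using wf[OF uV] by auto
    qed
    have ne: "outs cop E u \<noteq> []" "ins cop E v \<noteq> []" using wf uV vV by auto
    have rm: "remove1 v (u # vs) = u # remove1 v vs" using False by simp
    from list_split_disj[OF AB' d2 ne]
    show ?thesis
    proof
      assume "\<exists>M. A = A' @ ins cop E v @ M \<and> B' = M @ outs cop E u @ B"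
      then obtain M where M: "A = A' @ ins cop E v @ M" "B' = M @ outs cop E u @ B" by blast
      have "sweeps cop E ((A' @ outs cop E v @ M) @ ins cop E u @ B) (u # remove1 v vs) G"
        by (rule sweeps.sweeps_Cons) (use sw M in simp)
      then show ?thesis using M rm by (intro exI[of _ A'] exI[of _ "M @ ins cop E u @ B"]) simp
    next
      assume "\<exists>M. A' = A @ outs cop E u @ M \<and> B = M @ ins cop E v @ B'"
      then obtain M where M: "A' = A @ outs cop E u @ M" "B = M @ ins cop E v @ B'" by blast
      have "sweeps cop E (A @ ins cop E u @ (M @ outs cop E v @ B')) (u # remove1 v vs) G"
        by (rule sweeps.sweeps_Cons) (use sw M in simp)
      then show ?thesis using M rm by (intro exI[of _ "A @ ins cop E u @ M"] exI[of _ B']) simp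
    qed
  qed
qed


definition cnt :: "nat \<Rightarrow> nat \<Rightarrow> nat" where "cnt n v = (if v \<le> n then 1 else 2)"
definition newS :: "nat \<Rightarrow> nat \<Rightarrow> slot list" where
  "newS n v = (if v \<le> n then [(v,0),(v,1)] else [(v,0)])"

fun sfr :: "nat \<Rightarrow> nat list \<Rightarrow> nat \<Rightarrow> slot list" where
  "sfr n ps 0 = [(0,0)]"
| "sfr n ps (Suc k) = take (ps!k) (sfr n ps k) @ newS n (Suc k) @ drop (ps!k + cnt n (Suc k)) (sfr n ps k)"

definition flen :: "nat \<Rightarrow> nat \<Rightarrow> nat" where "flen n k = (if k \<le> n then Suc k else 2*n + 1 - k)"

definition LR :: "nat \<Rightarrow> nat list set" where
  "LR n = {ps. length ps = 2*n \<and> (\<forall>k<2*n. ps!k + cnt n (Suc k) \<le> flen n k) \<and>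
               (\<forall>k. Suc k < 2*n \<longrightarrow> ps!k + 1 \<le> ps!(Suc k) + cnt n (Suc (Suc k)))}"

definition srcOf :: "nat \<Rightarrow> nat list \<Rightarrow> slot \<Rightarrow> slot" where
  "srcOf n ps s = (if fst s = 0 then hd (sfr n ps (2*n)) else sfr n ps (fst s - 1) ! (ps!(fst s - 1) + snd s))"

definition buildE :: "nat \<Rightarrow> nat list \<Rightarrow> pedge set" where
  "buildE n ps = (\<lambda>s. (srcOf n ps s, s)) ` {s. inSlot n (\<lambda>v. v \<le> n) s}"

definition created :: "nat \<Rightarrow> nat \<Rightarrow> slot set" where
  "created n k = {(0,0)} \<union> {(v,i). 1 \<le> v \<and> v \<le> k \<and> (if v \<le> n then i < 2 else i = 0)}"

definition consl :: "nat \<Rightarrow> nat list \<Rightarrow> nat \<Rightarrow> slot list" where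
  "consl n ps v = map (\<lambda>j. srcOf n ps (v, j)) [0..<cnt n v]"

definition inl :: "nat \<Rightarrow> nat \<Rightarrow> slot list" where
  "inl n v = map (\<lambda>j. (v, j)) [0..<cnt n v]"

lemma set_newS: "set (newS n v) = {(v,i) | i. if v \<le> n then i < 2 else i = 0}"
  by (auto simp: newS_def)

lemma length_newS: "length (newS n v) = 3 - cnt n v"
  by (simp add: newS_def cnt_def)

lemma distinct_newS: "distinct (newS n v)"
  by (simp add: newS_def)

context
  fixes n :: nat and ps :: "nat list"
  assumes n1: "n \<ge> 1" and LRps: "ps \<in> LR n"
begin

lemma ps_len: "length ps = 2*n" using LRps by (simp add: LR_def)

lemma ps_bound: "k < 2*n \<Longrightarrow> ps!k + cnt n (Suc k) \<le> flen n k" using LRps by (simp add: LR_def)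

lemma ps_local: "Suc k < 2*n \<Longrightarrow> ps!k + 1 \<le> ps!(Suc k) + cnt n (Suc (Suc k))"
  using LRps by (simp add: LR_def)

lemma sfr_len: "k \<le> 2*n \<Longrightarrow> length (sfr n ps k) = flen n k"
proof (induction k)
  case 0
  then show ?case by (simp add: flen_def)
next
  case (Suc k)
  have b: "ps!k + cnt n (Suc k) \<le> length (sfr n ps k)" using ps_bound[of k] Suc by simp
  have "length (sfr n ps (Suc k)) = length (sfr n ps k) + 3 - 2 * cnt n (Suc k)"
    using b by (simp add: length_newS cnt_def split: if_splits)
  then show ?case using Suc by (simp add: flen_def cnt_def split: if_splits)
qed

lemma ps_bound': "k < 2*n \<Longrightarrow> ps!k + cnt n (Suc k) \<le> length (sfr n ps k)"
  using ps_bound sfr_len by simp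

lemma consl_eq: "k < 2*n \<Longrightarrow> consl n ps (Suc k) = take (cnt n (Suc k)) (drop (ps!k) (sfr n ps k))"
proof -
  assume k: "k < 2*n"
  have b: "ps!k + cnt n (Suc k) \<le> length (sfr n ps k)" using ps_bound' k .
  show ?thesis
    unfolding consl_def srcOf_def
    by (rule nth_equalityI) (use b in auto)
qed

lemma sfr_split: "k < 2*n \<Longrightarrow> sfr n ps k = take (ps!k) (sfr n ps k) @ consl n ps (Suc k) @ drop (ps!k + cnt n (Suc k)) (sfr n ps k)"
  by (simp add: consl_eq) (metis append_take_drop_id add.commute drop_drop)

lemma inv_created: "k \<le> 2*n \<Longrightarrow> distinct (concat (map (consl n ps) [1..<Suc k]) @ sfr n ps k) \<and>
   set (concat (map (consl n ps) [1..<Suc k]) @ sfr n ps k) = created n k"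
proof (induction k)
  case 0
  then show ?case by (auto simp: created_def)
next
  case (Suc k)
  let ?P = "concat (map (consl n ps) [1..<Suc k])"
  let ?S = "sfr n ps k"
  let ?T = "take (ps!k) ?S" and ?C = "consl n ps (Suc k)" and ?D = "drop (ps!k + cnt n (Suc k)) ?S"
  have k: "k < 2*n" using Suc by simp
  have sp: "?S = ?T @ ?C @ ?D" by (rule sfr_split[OF k])
  have IH: "distinct (?P @ ?T @ ?C @ ?D)" "set (?P @ ?T @ ?C @ ?D) = created n k"
    using Suc.IH Suc.prems sp by (metis Suc_leD)+
  have nd: "set (newS n (Suc k)) \<inter> created n k = {}"
    by (auto simp: set_newS created_def)
  have cr: "created n (Suc k) = created n k \<union> set (newS n (Suc k))"
    by (auto simp: set_newS created_def)
  have e1: "concat (map (consl n ps) [1..<Suc (Suc k)]) @ sfr n ps (Suc k) = ?P @ ?C @ ?T @ newS n (Suc k) @ ?D"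
    by simp
  show ?case unfolding e1
    using IH nd cr distinct_newS[of n "Suc k"] by auto
qed

lemma flen_2n: "flen n (2*n) = 1" using n1 by (simp add: flen_def)

lemma sfr_final: "sfr n ps (2*n) = [srcOf n ps (0,0)]"
proof -
  have "length (sfr n ps (2*n)) = 1" using sfr_len[of "2*n"] flen_2n by simp
  then obtain x where "sfr n ps (2*n) = [x]" by (metis One_nat_def length_0_conv length_Suc_conv)
  then show ?thesis by (simp add: srcOf_def)
qed

definition IL :: "slot list" where "IL = concat (map (inl n) [1..<Suc (2*n)]) @ [(0,0)]"

lemma IL_set: "set IL = {s. inSlot n (\<lambda>v. v \<le> n) s}"
proof -
  have "set IL = {(0,0)} \<union> {(v, j). 1 \<le> v \<and> v \<le> 2*n \<and> j < cnt n v}"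
    by (auto simp: IL_def inl_def)
  also have "\<dots> = {s. inSlot n (\<lambda>v. v \<le> n) s}"
    by (auto simp: inSlot_def verts_def cnt_def)
  finally show ?thesis .
qed

lemma distinct_inl_concat: "distinct (concat (map (inl n) [1..<b]))"
proof (induction b)
  case 0
  then show ?case by simp
next
  case (Suc b)
  show ?case
  proof (cases "1 \<le> b")
    case True
    have "set (concat (map (inl n) [1..<b])) \<inter> set (inl n b) = {}"
      by (auto simp: inl_def)
    moreover have "distinct (inl n b)" by (simp add: inl_def distinct_map inj_on_def)
    ultimately show ?thesis using Suc True by simp
  next
    case False
    then show ?thesis by simp
  qed
qed

lemma IL_distinct: "distinct IL"
  using distinct_inl_concat[of "Suc (2*n)"] by (auto simp: IL_def inl_def)

lemma map_IL: "map (srcOf n ps) IL = concat (map (consl n ps) [1..<Suc (2*n)]) @ sfr n ps (2*n)"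
  by (simp add: IL_def sfr_final map_concat consl_def[abs_def] inl_def comp_def)

lemma srcOf_inj: "inj_on (srcOf n ps) {s. inSlot n (\<lambda>v. v \<le> n) s}"
proof -
  have "distinct (map (srcOf n ps) IL)" unfolding map_IL using inv_created[of "2*n"] by simp
  then show ?thesis using IL_set by (metis distinct_map)
qed

lemma created_final: "created n (2*n) = {s. outSlot n (\<lambda>v. v \<le> n) s}"
  by (auto simp: created_def outSlot_def verts_def split: if_splits)

lemma srcOf_img: "srcOf n ps ` {s. inSlot n (\<lambda>v. v \<le> n) s} = {s. outSlot n (\<lambda>v. v \<le> n) s}"
proof -
  have "set (map (srcOf n ps) IL) = created n (2*n)" unfolding map_IL using inv_created[of "2*n"] by simp
  then show ?thesis using IL_set created_final by simp
qed

lemma srcOf_in_sfr: "1 \<le> v \<Longrightarrow> v \<le> 2*n \<Longrightarrow> j < cnt n v \<Longrightarrow> srcOf n ps (v, j) \<in> set (sfr n ps (v - 1))"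
proof -
  assume a: "1 \<le> v" "v \<le> 2*n" "j < cnt n v"
  have "ps!(v-1) + cnt n (Suc (v-1)) \<le> length (sfr n ps (v-1))" using ps_bound'[of "v-1"] a by simp
  then show ?thesis using a by (simp add: srcOf_def)
qed

lemma sfr_created: "k \<le> 2*n \<Longrightarrow> set (sfr n ps k) \<subseteq> created n k"
  using inv_created by auto

lemma srcOf_lt: "1 \<le> v \<Longrightarrow> v \<le> 2*n \<Longrightarrow> j < cnt n v \<Longrightarrow> fst (srcOf n ps (v, j)) < v"
proof -
  assume a: "1 \<le> v" "v \<le> 2*n" "j < cnt n v"
  have "v - 1 \<le> 2*n" using a by simp
  then have "srcOf n ps (v, j) \<in> created n (v - 1)" using srcOf_in_sfr[OF a] sfr_created[of "v-1"] by blast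
  then show ?thesis using a by (auto simp: created_def)
qed

lemma ps0: "ps!0 = 0" using ps_bound[of 0] n1 by (simp add: flen_def cnt_def)

lemma srcOf_10: "srcOf n ps (1, 0) = (0, 0)" by (simp add: srcOf_def ps0)

lemma srcOf_00: "srcOf n ps (0, 0) = (2*n, 0)"
proof -
  obtain m where m: "2*n = Suc m" using n1 by (cases "2*n") auto
  have len: "length (sfr n ps m) = 2" using sfr_len[of m] m n1 by (simp add: flen_def split: if_splits; arith)
  have b: "ps!m + 2 \<le> 2" using ps_bound'[of m] m len n1 by (simp add: cnt_def)
  have "sfr n ps (Suc m) = [(Suc m, 0)]" using b len m n1 by (simp add: newS_def cnt_def)
  then show ?thesis using sfr_final m by simp
qed

lemma cnt_cases: "cnt n v = 1 \<or> cnt n v = 2" by (simp add: cnt_def)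

end


lemma pos_nth: "distinct xs \<Longrightarrow> i < length xs \<Longrightarrow> pos (xs!i) xs = i"
  unfolding pos_def
  by (rule Least_equality) (auto simp: nth_eq_iff_index_eq)

lemma pos_in: "x \<in> set xs \<Longrightarrow> pos x xs < length xs \<and> xs ! pos x xs = x"
proof -
  assume "x \<in> set xs"
  then obtain i where i: "i < length xs" "xs!i = x" by (auto simp: in_set_conv_nth)
  have "pos x xs \<le> i" unfolding pos_def by (rule Least_le) (use i in auto)
  moreover have "pos x xs < length xs \<and> xs ! pos x xs = x"
    unfolding pos_def by (rule LeastI[of _ i]) (use i in auto)
  ultimately show ?thesis by auto
qed

lemma pos_map: "distinct (map f xs) \<Longrightarrow> x \<in> set xs \<Longrightarrow> pos (f x) (map f xs) = pos x xs"
proof -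
  assume d: "distinct (map f xs)" and x: "x \<in> set xs"
  have "pos x xs < length xs" "xs ! pos x xs = x" using pos_in[OF x] by auto
  then show ?thesis using pos_nth[OF d, of "pos x xs"] by simp
qed

lemma min_pos_block:
  assumes "distinct (T @ C @ D)" "C \<noteq> []"
  shows "Min ((\<lambda>e. pos e (T @ C @ D)) ` set C) = length T"
proof -
  have "(\<lambda>e. pos e (T @ C @ D)) ` set C = (\<lambda>j. length T + j) ` {..<length C}"
  proof -
    have "pos (C!j) (T @ C @ D) = length T + j" if "j < length C" for j
      using pos_nth[OF assms(1), of "length T + j"] that by (simp add: nth_append)
    then show ?thesis by (force simp: in_set_conv_nth image_iff)
  qed
  moreover have "Min ((\<lambda>j. length T + j) ` {..<length C}) = length T"
  proof (rule Min_eqI)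
    show "length T \<in> (\<lambda>j. length T + j) ` {..<length C}" using assms(2) by force
  qed auto
  ultimately show ?thesis by simp
qed

lemma step_pos:
  assumes S': "S' = take i S @ N @ drop (i + c) S" and d: "distinct S" "distinct S'"
    and ic: "i + c \<le> length S" and x: "x \<in> set S" and nb: "\<not> (i \<le> pos x S \<and> pos x S < i + c)"
  shows "x \<in> set S' \<and> pos x S' = (if pos x S < i then pos x S else pos x S + length N - c)"
proof -
  let ?p = "pos x S"
  have p: "?p < length S" "S ! ?p = x" using pos_in[OF x] by auto
  show ?thesis
  proof (cases "?p < i")
    case True
    have "S' ! ?p = x" using S' True p ic by (simp add: nth_append)
    moreover have "?p < length S'" using S' True ic by simp
    ultimately show ?thesis using pos_nth[OF d(2), of ?p] True by (metis nth_mem)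
  next
    case False
    then have ge: "i + c \<le> ?p" using nb by simp
    let ?r = "?p - (i + c)"
    let ?q = "(i + length N) + ?r"
    have li: "length (take i S @ N) = i + length N" using ic by simp
    have "S' ! ?q = drop (i + c) S ! ?r"
      unfolding S' append_assoc[symmetric] by (metis li nth_append_length_plus)
    also have "\<dots> = S ! ?p" using ic ge p by simp
    finally have e: "S' ! ?q = x" using p by simp
    moreover have "?q < length S'" using S' ge ic p by simp
    moreover have "?q = ?p + length N - c" using ge by simp
    ultimately show ?thesis using pos_nth[OF d(2), of ?q] False p by (metis nth_mem)
  qed
qed

context
  fixes n :: nat and ps :: "nat list"
  assumes n1: "n \<ge> 1" and LRps: "ps \<in> LR n"
begin

abbreviation "cp \<equiv> (\<lambda>v::nat. v \<le> n)"
abbreviation "EE \<equiv> buildE n ps"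
definition oE :: "slot \<Rightarrow> pedge" where "oE s = outEdge (buildE n ps) (fst s) (snd s)"

lemma bE_mem: "e \<in> EE \<longleftrightarrow> inSlot n cp (snd e) \<and> fst e = srcOf n ps (snd e)"
  by (cases e) (auto simp: buildE_def)

lemma inEdge_bE: "inSlot n cp (v, j) \<Longrightarrow> inEdge EE v j = (srcOf n ps (v, j), (v, j))"
  unfolding inEdge_def by (rule the_equality) (auto simp: bE_mem)

lemma oE_src: "inSlot n cp t \<Longrightarrow> oE (srcOf n ps t) = (srcOf n ps t, t)"
  unfolding oE_def outEdge_def
proof (rule the_equality)
  assume t: "inSlot n cp t"
  show "(srcOf n ps t, t) \<in> EE \<and> fst (srcOf n ps t, t) = (fst (srcOf n ps t), snd (srcOf n ps t))"
    using t by (simp add: bE_mem)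
  fix e assume e: "e \<in> EE \<and> fst e = (fst (srcOf n ps t), snd (srcOf n ps t))"
  then have "inSlot n cp (snd e)" "srcOf n ps (snd e) = srcOf n ps t" by (auto simp: bE_mem)
  then have "snd e = t" using inj_onD[OF srcOf_inj[OF n1 LRps]] t by blast
  then show "e = (srcOf n ps t, t)" using e by (metis bE_mem prod.collapse)
qed

lemma outslot_src: "outSlot n cp s \<Longrightarrow> \<exists>t. inSlot n cp t \<and> srcOf n ps t = s"
  using srcOf_img[OF n1 LRps] by (metis (mono_tags, lifting) image_iff mem_Collect_eq)

lemma oE_fst: "outSlot n cp s \<Longrightarrow> fst (oE s) = s"
  by (metis fst_conv oE_src outslot_src)

lemma oE_inj: "outSlot n cp s \<Longrightarrow> outSlot n cp s' \<Longrightarrow> oE s = oE s' \<Longrightarrow> s = s'"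
  using oE_fst by metis

lemma sfr_outslot: "k \<le> 2*n \<Longrightarrow> x \<in> set (sfr n ps k) \<Longrightarrow> outSlot n cp x"
proof -
  assume k: "k \<le> 2*n" and x: "x \<in> set (sfr n ps k)"
  have "x \<in> created n k" using sfr_created[OF n1 LRps k] x by auto
  then have "x \<in> created n (2*n)" using k by (auto simp: created_def)
  then show ?thesis using created_final[OF n1 LRps] by auto
qed

lemma sfr_distinct: "k \<le> 2*n \<Longrightarrow> distinct (sfr n ps k)"
  using inv_created[OF n1 LRps] by auto

lemma map_oE_distinct: "k \<le> 2*n \<Longrightarrow> distinct (map oE (sfr n ps k))"
  using sfr_distinct sfr_outslot oE_inj by (simp add: distinct_map inj_on_def)

lemma inslot_v: "1 \<le> v \<Longrightarrow> v \<le> 2*n \<Longrightarrow> j < cnt n v \<Longrightarrow> inSlot n cp (v, j)"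
  by (auto simp: inSlot_def verts_def cnt_def)

lemma ins_bE: "1 \<le> v \<Longrightarrow> v \<le> 2*n \<Longrightarrow> ins cp EE v = map oE (consl n ps v)"
proof -
  assume v: "1 \<le> v" "v \<le> 2*n"
  have e: "inEdge EE v j = oE (srcOf n ps (v, j))" if "j < cnt n v" for j
    using inEdge_bE[OF inslot_v[OF v that]] oE_src[OF inslot_v[OF v that]] by simp
  show ?thesis
  proof (cases "v \<le> n")
    case True
    then show ?thesis using e[of 0] by (simp add: ins_def consl_def cnt_def)
  next
    case False
    then show ?thesis using e[of 0] e[of 1] by (simp add: ins_def consl_def cnt_def numeral_2_eq_2 upt_rec)
  qed
qed

lemma outs_bE: "outs cp EE v = map oE (newS n v)"
  by (simp add: outs_def newS_def oE_def)

lemma cnt_pos: "cnt n v \<ge> 1" by (simp add: cnt_def)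

lemma consl_ne: "consl n ps v \<noteq> []" using cnt_pos[of v] by (simp add: consl_def)

lemma sfr_step_parts:
  assumes k: "k < 2*n"
  shows "map oE (sfr n ps k) = map oE (take (ps!k) (sfr n ps k)) @ ins cp EE (Suc k) @ map oE (drop (ps!k + cnt n (Suc k)) (sfr n ps k))"
    and "map oE (sfr n ps (Suc k)) = map oE (take (ps!k) (sfr n ps k)) @ outs cp EE (Suc k) @ map oE (drop (ps!k + cnt n (Suc k)) (sfr n ps k))"
proof -
  have "ins cp EE (Suc k) = map oE (consl n ps (Suc k))" using ins_bE[of "Suc k"] k by simp
  then show "map oE (sfr n ps k) = map oE (take (ps!k) (sfr n ps k)) @ ins cp EE (Suc k) @ map oE (drop (ps!k + cnt n (Suc k)) (sfr n ps k))"
    using sfr_split[OF n1 LRps k] by (metis map_append)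
  show "map oE (sfr n ps (Suc k)) = map oE (take (ps!k) (sfr n ps k)) @ outs cp EE (Suc k) @ map oE (drop (ps!k + cnt n (Suc k)) (sfr n ps k))"
    by (simp add: outs_bE)
qed

lemma globalIn_bE: "globalIn EE = oE (0,0)" by (simp add: globalIn_def oE_def)

lemma in00: "inSlot n cp (0,0)" by (simp add: inSlot_def)
lemma in10: "inSlot n cp (1,0)" using n1 by (simp add: inSlot_def verts_def)

lemma globalIn_bE': "globalIn EE = ((0,0),(1,0))"
  using oE_src[OF in10] srcOf_10[OF n1 LRps] globalIn_bE by simp

lemma globalOut_bE: "globalOut EE = ((2*n,0),(0,0))"
  using inEdge_bE[OF in00] srcOf_00[OF n1 LRps] by (simp add: globalOut_def)

lemma globalOut_oE: "globalOut EE = oE (srcOf n ps (0,0))"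
  using inEdge_bE[OF in00] oE_src[OF in00] by (simp add: globalOut_def)

lemma frontier_bE: "k \<le> 2*n \<Longrightarrow> frontier cp EE k = map oE (sfr n ps k)"
proof (induction k)
  case 0
  then show ?case by (simp add: globalIn_bE)
next
  case (Suc k)
  let ?T = "map oE (take (ps!k) (sfr n ps k))" and ?C = "ins cp EE (Suc k)"
    and ?D = "map oE (drop (ps!k + cnt n (Suc k)) (sfr n ps k))"
  have k: "k < 2*n" using Suc by simp
  have F: "frontier cp EE k = ?T @ ?C @ ?D" using Suc sfr_step_parts(1)[OF k] by simp
  have d: "distinct (?T @ ?C @ ?D)" using map_oE_distinct[of k] k sfr_step_parts(1)[OF k] by simp
  have Cne: "?C \<noteq> []" using ins_bE[of "Suc k"] k consl_ne by simp
  have lenT: "length ?T = ps!k" using ps_bound'[OF n1 LRps k] by simp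
  have lenC: "length ?C = cnt n (Suc k)" using ins_bE[of "Suc k"] k by (simp add: consl_def)
  have "frontier cp EE (Suc k) = ?T @ outs cp EE (Suc k) @ ?D"
    using min_pos_block[OF d Cne] lenT lenC F by (simp add: frontier_step_def Let_def)
  then show ?case using sfr_step_parts(2)[OF k] by simp
qed

lemma card_cop: "card {v \<in> verts n. v \<le> n} = n"
proof -
  have "{v \<in> verts n. v \<le> n} = {1..n}" by (auto simp: verts_def)
  then show ?thesis by simp
qed

lemma src_out: "inSlot n cp t \<Longrightarrow> outSlot n cp (srcOf n ps t)"
  using srcOf_img[OF n1 LRps] by blast

lemma adj_lt: "(u, w) \<in> adj n EE \<Longrightarrow> u < w"
proof -
  assume "(u, w) \<in> adj n EE"
  then obtain e where e: "e \<in> EE" "u = fst (fst e)" "w = fst (snd e)" "w \<in> verts n"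
    by (auto simp: adj_def)
  obtain t where t: "inSlot n cp t" "e = (srcOf n ps t, t)" using e(1) bE_mem by (metis prod.collapse)
  have wt: "w = fst t" using e(3) t(2) by simp
  have "1 \<le> fst t" "fst t \<le> 2*n" "snd t < cnt n (fst t)"
    using t(1) e(4) wt by (auto simp: inSlot_def verts_def cnt_def split: if_splits)
  then have "fst (srcOf n ps (fst t, snd t)) < fst t" using srcOf_lt[OF n1 LRps] by blast
  then show ?thesis using e t by simp
qed

lemma acyclic_lt: "(\<And>u w. (u, w) \<in> r \<Longrightarrow> (u::nat) < w) \<Longrightarrow> acyclic r"
proof -
  assume h: "\<And>u w. (u, w) \<in> r \<Longrightarrow> (u::nat) < w"
  have "(u, w) \<in> r\<^sup>+ \<Longrightarrow> u < w" for u w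
    by (induction rule: trancl_induct) (auto dest: h)
  then show ?thesis unfolding acyclic_def by blast
qed

lemma connected_1: "w \<in> verts n \<Longrightarrow> (1, w) \<in> (adj n EE \<union> (adj n EE)\<inverse>)\<^sup>*"
proof (induction w rule: less_induct)
  case (less w)
  show ?case
  proof (cases "w = 1")
    case True
    then show ?thesis by simp
  next
    case False
    then have w: "2 \<le> w" "w \<le> 2*n" using less.prems by (auto simp: verts_def)
    have tin: "inSlot n cp (w, 0)" using w by (auto simp: inSlot_def verts_def)
    let ?s = "srcOf n ps (w, 0)"
    have ne: "?s \<noteq> (0,0)"
      using inj_onD[OF srcOf_inj[OF n1 LRps], of "(w,0)" "(1,0)"] tin in10 srcOf_10[OF n1 LRps] w by auto
    have os: "outSlot n cp ?s" using src_out[OF tin] .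
    have u: "fst ?s \<in> verts n" using os ne by (auto simp: outSlot_def) (metis prod.collapse)
    have lt: "fst ?s < w" using srcOf_lt[OF n1 LRps, of w 0] w cnt_pos[of w] by simp
    have mem: "(?s, (w, 0)) \<in> EE" using tin by (simp add: bE_mem)
    have "\<exists>e. (fst ?s, w) = (fst (fst e), fst (snd e)) \<and> e \<in> EE \<and> fst (fst e) \<in> verts n \<and> fst (snd e) \<in> verts n"
      by (intro exI[of _ "(?s, (w, 0))"]) (use mem u less.prems in simp)
    then have "(fst ?s, w) \<in> adj n EE" unfolding adj_def by blast
    moreover have "(1, fst ?s) \<in> (adj n EE \<union> (adj n EE)\<inverse>)\<^sup>*" using less.IH[OF lt u] .
    ultimately show ?thesis by (meson UnI1 rtrancl.rtrancl_into_rtrancl)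
  qed
qed

lemma connected: "u \<in> verts n \<Longrightarrow> w \<in> verts n \<Longrightarrow> (u, w) \<in> (adj n EE \<union> (adj n EE)\<inverse>)\<^sup>*"
proof -
  assume u: "u \<in> verts n" and w: "w \<in> verts n"
  let ?R = "adj n EE \<union> (adj n EE)\<inverse>"
  have "(1, u) \<in> ?R\<^sup>*" using connected_1[OF u] .
  then have "(u, 1) \<in> (?R\<inverse>)\<^sup>*" by (rule rtrancl_converseI)
  moreover have "?R\<inverse> = ?R" by auto
  ultimately have "(u, 1) \<in> ?R\<^sup>*" by simp
  then show ?thesis using connected_1[OF w] by (rule rtrancl_trans)
qed

lemma sweeps_bE: "k \<le> 2*n \<Longrightarrow> sweeps cp EE (map oE (sfr n ps k)) [Suc k..<Suc (2*n)] (map oE (sfr n ps (2*n)))"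
proof (induction "2*n - k" arbitrary: k)
  case 0
  then have "k = 2*n" by simp
  then show ?case by (simp add: sweeps.sweeps_Nil)
next
  case (Suc d)
  then have k: "k < 2*n" by simp
  have dk: "d = 2*n - Suc k" using Suc.hyps(2) by simp
  have IH: "sweeps cp EE (map oE (sfr n ps (Suc k))) [Suc (Suc k)..<Suc (2*n)] (map oE (sfr n ps (2*n)))"
    using Suc.hyps(1)[OF dk] k by simp
  have e: "[Suc k..<Suc (2*n)] = Suc k # [Suc (Suc k)..<Suc (2*n)]" using k by (simp add: upt_rec)
  show ?case unfolding e sfr_step_parts(1)[OF k]
    by (rule sweeps.sweeps_Cons) (use IH[unfolded sfr_step_parts(2)[OF k]] in assumption)
qed

lemma upward_bE: "upward_planar n cp EE"
proof -
  have "sweeps cp EE (map oE (sfr n ps 0)) [Suc 0..<Suc (2*n)] (map oE (sfr n ps (2*n)))"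
    using sweeps_bE[of 0] by simp
  then have "sweeps cp EE [globalIn EE] [1..<Suc (2*n)] [globalOut EE]"
    using sfr_final[OF n1 LRps] globalOut_oE by (simp add: globalIn_bE)
  moreover have "set [1..<Suc (2*n)] = verts n" by (auto simp: verts_def)
  ultimately show ?thesis unfolding upward_planar_def by (intro exI[of _ "[1..<Suc (2*n)]"]) simp
qed

lemma PC_bE: "is_PC_prograph n cp EE"
proof -
  have 1: "card {v \<in> verts n. v \<le> n} = n" by (rule card_cop)
  have 2: "\<forall>e\<in>EE. outSlot n cp (fst e) \<and> inSlot n cp (snd e)"
    using bE_mem src_out by auto
  have 3: "\<forall>s. outSlot n cp s \<longrightarrow> (\<exists>!e. e \<in> EE \<and> fst e = s)"
  proof (intro allI impI)
    fix s assume s: "outSlot n cp s"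
    obtain t where t: "inSlot n cp t" "srcOf n ps t = s" using outslot_src[OF s] by blast
    show "\<exists>!e. e \<in> EE \<and> fst e = s"
    proof (rule ex1I[of _ "(s, t)"])
      show "(s, t) \<in> EE \<and> fst (s, t) = s" using t by (simp add: bE_mem)
      fix e assume e: "e \<in> EE \<and> fst e = s"
      then have "inSlot n cp (snd e)" "srcOf n ps (snd e) = srcOf n ps t" using t by (auto simp: bE_mem)
      then have "snd e = t" using inj_onD[OF srcOf_inj[OF n1 LRps], of "snd e" t] t by simp
      then show "e = (s, t)" using e by (metis prod.collapse)
    qed
  qed
  have 4: "\<forall>s. inSlot n cp s \<longrightarrow> (\<exists>!e. e \<in> EE \<and> snd e = s)"
  proof (intro allI impI)
    fix s assume s: "inSlot n cp s"
    show "\<exists>!e. e \<in> EE \<and> snd e = s"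
      by (rule ex1I[of _ "(srcOf n ps s, s)"]) (use s in \<open>auto simp: bE_mem\<close>)
  qed
  have 5: "fst (snd (globalIn EE)) \<in> verts n \<and> fst (snd (globalIn EE)) \<le> n"
    using n1 by (simp add: globalIn_bE' verts_def)
  have 6: "fst (fst (globalOut EE)) \<in> verts n \<and> \<not> fst (fst (globalOut EE)) \<le> n"
    using n1 by (simp add: globalOut_bE verts_def)
  have 7: "acyclic (adj n EE)" using acyclic_lt adj_lt by blast
  have 8: "\<forall>u\<in>verts n. \<forall>w\<in>verts n. (u, w) \<in> (adj n EE \<union> (adj n EE)\<inverse>)\<^sup>*"
    using connected by blast
  have 9: "upward_planar n cp EE" by (rule upward_bE)
  show ?thesis unfolding is_PC_prograph_def using 1 2 3 4 5 6 7 8 9 by simp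
qed

abbreviation "X w j \<equiv> srcOf n ps (w, j)"
abbreviation "P m x \<equiv> pos x (sfr n ps m)"

lemma not_consumed:
  assumes "Suc m \<noteq> w" "m < 2*n" "1 \<le> w" "w \<le> 2*n" "j < cnt n w"
  shows "X w j \<notin> set (consl n ps (Suc m))"
proof
  assume "X w j \<in> set (consl n ps (Suc m))"
  then obtain j' where j': "j' < cnt n (Suc m)" "X w j = X (Suc m) j'" by (auto simp: consl_def)
  have "(w, j) = (Suc m, j')"
    using inj_onD[OF srcOf_inj[OF n1 LRps] j'(2)] inslot_v assms j' by simp
  then show False using assms by simp
qed

lemma block_consumed:
  assumes m: "m < 2*n" and x: "x \<in> set (sfr n ps m)" and nc: "x \<notin> set (consl n ps (Suc m))"
  shows "\<not> (ps!m \<le> P m x \<and> P m x < ps!m + cnt n (Suc m))"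
proof
  assume h: "ps!m \<le> P m x \<and> P m x < ps!m + cnt n (Suc m)"
  have p: "P m x < length (sfr n ps m)" "sfr n ps m ! P m x = x" using pos_in[OF x] by auto
  have b: "ps!m + cnt n (Suc m) \<le> length (sfr n ps m)" using ps_bound'[OF n1 LRps m] .
  have h1: "ps!m \<le> P m x" "P m x < ps!m + cnt n (Suc m)" using h by auto
  have lc: "P m x - ps!m < cnt n (Suc m)" using h1 by linarith
  have "consl n ps (Suc m) ! (P m x - ps!m) = drop (ps!m) (sfr n ps m) ! (P m x - ps!m)"
    using consl_eq[OF n1 LRps m] lc by simp
  also have "\<dots> = sfr n ps m ! (ps!m + (P m x - ps!m))" by (rule nth_drop) (use b in simp)
  also have "ps!m + (P m x - ps!m) = P m x" using h1 by simp
  finally have "consl n ps (Suc m) ! (P m x - ps!m) = sfr n ps m ! P m x" .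
  moreover have "P m x - ps!m < length (consl n ps (Suc m))" using lc by (simp add: consl_def)
  ultimately show False using nc p by (metis nth_mem)
qed

lemma step_sfr:
  assumes m: "m < 2*n" and x: "x \<in> set (sfr n ps m)" and nc: "x \<notin> set (consl n ps (Suc m))"
  shows "x \<in> set (sfr n ps (Suc m)) \<and> P (Suc m) x = (if P m x < ps!m then P m x else P m x + (3 - cnt n (Suc m)) - cnt n (Suc m))"
  using step_pos[of "sfr n ps (Suc m)" "ps!m" "sfr n ps m" "newS n (Suc m)" "cnt n (Suc m)" x]
    sfr_distinct[of m] sfr_distinct[of "Suc m"] m ps_bound'[OF n1 LRps m] x block_consumed[OF m x nc]
  by (simp add: length_newS)

lemma final_pos:
  assumes "1 \<le> w" "w \<le> 2*n" "j < cnt n w"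
  shows "X w j \<in> set (sfr n ps (w - 1)) \<and> P (w - 1) (X w j) = ps!(w-1) + j"
proof -
  have b: "ps!(w-1) + cnt n (Suc (w-1)) \<le> length (sfr n ps (w-1))" using ps_bound'[OF n1 LRps, of "w-1"] assms by simp
  have e: "X w j = sfr n ps (w-1) ! (ps!(w-1) + j)" using assms by (simp add: srcOf_def)
  have l: "ps!(w-1) + j < length (sfr n ps (w-1))" using b assms by simp
  show ?thesis using pos_nth[OF sfr_distinct[of "w-1"] l] e l assms by (simp add: nth_mem)
qed

lemma claimH:
  assumes k: "k < 2*n" "Suc k < w" "w \<le> 2*n"
    and h: "\<forall>j<cnt n w. X w j \<in> set (sfr n ps k) \<and> P k (X w j) < ps!k"
  shows "Suc k \<le> m \<Longrightarrow> m \<le> w - 1 \<Longrightarrow> \<forall>j<cnt n w. X w j \<in> set (sfr n ps m) \<and> P m (X w j) < ps!(m-1)"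
proof (induction m)
  case 0
  then show ?case by simp
next
  case (Suc m)
  show ?case
  proof (cases "m = k")
    case True
    show ?thesis
    proof (intro allI impI)
      fix j assume j: "j < cnt n w"
      have nc: "X w j \<notin> set (consl n ps (Suc k))" using not_consumed[of k w j] k j by simp
      show "X w j \<in> set (sfr n ps (Suc m)) \<and> P (Suc m) (X w j) < ps!(Suc m - 1)"
        using step_sfr[OF k(1) _ nc] h j True by simp
    qed
  next
    case False
    then have m: "Suc k \<le> m" "m < w - 1" using Suc.prems by auto
    have IH: "\<forall>j<cnt n w. X w j \<in> set (sfr n ps m) \<and> P m (X w j) < ps!(m-1)" using Suc.IH m by simp
    have m2: "m < 2*n" using m k by simp
    have loc: "ps!(m-1) + 1 \<le> ps!m + cnt n (Suc m)"
      using ps_local[OF n1 LRps, of "m-1"] m k by simp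
    show ?thesis
    proof (intro allI impI)
      fix j assume j: "j < cnt n w"
      have nc: "X w j \<notin> set (consl n ps (Suc m))" using not_consumed[of m w j] m k j by simp
      have xin: "X w j \<in> set (sfr n ps m)" "P m (X w j) < ps!(m-1)" using IH j by auto
      have "P m (X w j) < ps!m" using block_consumed[OF m2 xin(1) nc] xin(2) loc by linarith
      then show "X w j \<in> set (sfr n ps (Suc m)) \<and> P (Suc m) (X w j) < ps!(Suc m - 1)"
        using step_sfr[OF m2 xin(1) nc] by simp
    qed
  qed
qed

lemma claimG:
  assumes k: "k < 2*n" "Suc k < w" "w \<le> 2*n" and ab: "a < cnt n w" "b < cnt n w"
    and h: "X w a \<in> set (sfr n ps k)" "X w b \<in> set (sfr n ps k)"
           "P k (X w a) < ps!k" "ps!k + cnt n (Suc k) \<le> P k (X w b)"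
  shows "Suc k \<le> m \<Longrightarrow> m \<le> w - 1 \<Longrightarrow> X w a \<in> set (sfr n ps m) \<and> X w b \<in> set (sfr n ps m) \<and> P m (X w a) + 2 \<le> P m (X w b)"
proof (induction m)
  case 0
  then show ?case by simp
next
  case (Suc m)
  show ?case
  proof (cases "m = k")
    case True
    have nca: "X w a \<notin> set (consl n ps (Suc k))" using not_consumed[of k w a] k ab by simp
    have ncb: "X w b \<notin> set (consl n ps (Suc k))" using not_consumed[of k w b] k ab by simp
    show ?thesis using step_sfr[OF k(1) h(1) nca] step_sfr[OF k(1) h(2) ncb] h(3,4) True
      by (simp add: cnt_def split: if_splits)
  next
    case False
    then have m: "Suc k \<le> m" "m < w - 1" using Suc.prems by auto
    have IH: "X w a \<in> set (sfr n ps m) \<and> X w b \<in> set (sfr n ps m) \<and> P m (X w a) + 2 \<le> P m (X w b)"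
      using Suc.IH m by simp
    have m2: "m < 2*n" using m k by simp
    have nca: "X w a \<notin> set (consl n ps (Suc m))" using not_consumed[of m w a] m k ab by simp
    have ncb: "X w b \<notin> set (consl n ps (Suc m))" using not_consumed[of m w b] m k ab by simp
    have ba: "\<not> (ps!m \<le> P m (X w a) \<and> P m (X w a) < ps!m + cnt n (Suc m))"
      using block_consumed[OF m2 _ nca] IH by simp
    have bb: "\<not> (ps!m \<le> P m (X w b) \<and> P m (X w b) < ps!m + cnt n (Suc m))"
      using block_consumed[OF m2 _ ncb] IH by simp
    show ?thesis using step_sfr[OF m2 _ nca] step_sfr[OF m2 _ ncb] IH ba bb
      by (simp add: cnt_def split: if_splits)
  qed
qed

lemma KL:
  assumes k: "k < 2*n" "Suc k < w" "w \<le> 2*n"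
    and av: "\<forall>j<cnt n w. X w j \<in> set (sfr n ps k)"
  shows "j < cnt n w \<Longrightarrow> ps!k < P k (X w j)"
proof (rule ccontr)
  assume j: "j < cnt n w" and c: "\<not> ps!k < P k (X w j)"
  have blk: "\<And>j. j < cnt n w \<Longrightarrow> \<not> (ps!k \<le> P k (X w j) \<and> P k (X w j) < ps!k + cnt n (Suc k))"
    using block_consumed[OF k(1)] not_consumed[of k w] k av by simp
  have lt: "P k (X w j) < ps!k" using c blk[OF j] cnt_pos[of "Suc k"]
    by (cases "P k (X w j) = ps!k") auto
  have w1: "1 \<le> w" "Suc k \<le> w - 1" "w - 1 \<le> w - 1" using k by auto
  show False
  proof (cases "\<forall>j<cnt n w. P k (X w j) < ps!k")
    case True
    have H: "\<forall>j<cnt n w. X w j \<in> set (sfr n ps (w-1)) \<and> P (w-1) (X w j) < ps!(w-1-1)"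
      using claimH[OF k _ w1(2,3)] av True by simp
    let ?j = "cnt n w - 1"
    have "P (w-1) (X w ?j) = ps!(w-1) + ?j" using final_pos[of w ?j] k cnt_pos[of w] by simp
    moreover have "P (w-1) (X w ?j) < ps!(w-1-1)" using H cnt_pos[of w] by simp
    moreover have "ps!(w-1-1) + 1 \<le> ps!(w-1) + cnt n w"
    proof -
      have "w = Suc (Suc (w - 2))" using k by simp
      then obtain w' where w': "w = Suc (Suc w')" by blast
      show ?thesis using ps_local[OF n1 LRps, of w'] k w' by simp
    qed
    ultimately show False using cnt_pos[of w] by linarith
  next
    case False
    then obtain j' where j': "j' < cnt n w" "\<not> P k (X w j') < ps!k" by blast
    have "ps!k + cnt n (Suc k) \<le> P k (X w j')" using blk[OF j'(1)] j'(2) by simp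
    then have G: "P (w-1) (X w j) + 2 \<le> P (w-1) (X w j')"
      using claimG[OF k j j'(1) _ _ lt _ w1(2,3)] av j j'(1) by simp
    have "P (w-1) (X w j) = ps!(w-1) + j" using final_pos[of w j] k j by simp
    moreover have "P (w-1) (X w j') = ps!(w-1) + j'" using final_pos[of w j'] k j' by simp
    ultimately show False using G j j'(1) by (simp add: cnt_def split: if_splits)
  qed
qed

lemma leftpos_own:
  assumes k: "k < 2*n"
  shows "leftpos cp EE (frontier cp EE k) (Suc k) = ps!k"
proof -
  let ?T = "map oE (take (ps!k) (sfr n ps k))" and ?C = "ins cp EE (Suc k)"
    and ?D = "map oE (drop (ps!k + cnt n (Suc k)) (sfr n ps k))"
  have F: "frontier cp EE k = ?T @ ?C @ ?D" using frontier_bE[of k] k sfr_step_parts(1)[OF k] by simp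
  have d: "distinct (?T @ ?C @ ?D)" using map_oE_distinct[of k] k sfr_step_parts(1)[OF k] by simp
  have Cne: "?C \<noteq> []" using ins_bE[of "Suc k"] k consl_ne by simp
  have lenT: "length ?T = ps!k" using ps_bound'[OF n1 LRps k] by simp
  show ?thesis unfolding leftpos_def F using min_pos_block[OF d Cne] lenT by simp
qed

lemma canon_bE: "canonically_labelled n cp EE"
  unfolding canonically_labelled_def
proof (intro allI impI conjI)
  fix k assume k: "k < 2*n"
  have F: "frontier cp EE k = map oE (sfr n ps k)" using frontier_bE[of k] k by simp
  show "available n cp EE k (Suc k)"
    unfolding available_def using k sfr_step_parts(1)[OF k] frontier_bE[of k]
    by (auto simp: verts_def)
  fix w assume w: "available n cp EE k w \<and> w \<noteq> Suc k"
  then have wv: "w \<in> verts n" "k < w" "set (ins cp EE w) \<subseteq> set (frontier cp EE k)"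
    by (auto simp: available_def)
  then have w2: "Suc k < w" "w \<le> 2*n" "1 \<le> w" using w by (auto simp: verts_def)
  have insw: "ins cp EE w = map oE (consl n ps w)" using ins_bE w2 by simp
  have av: "\<forall>j<cnt n w. X w j \<in> set (sfr n ps k)"
  proof (intro allI impI)
    fix j assume j: "j < cnt n w"
    have "oE (X w j) \<in> set (map oE (sfr n ps k))"
      using wv(3) insw F j by (auto simp: consl_def)
    then obtain y where y: "y \<in> set (sfr n ps k)" "oE y = oE (X w j)" by auto
    have "outSlot n cp y" using sfr_outslot[of k y] k y by simp
    moreover have "outSlot n cp (X w j)" using src_out inslot_v w2 j by simp
    ultimately have "y = X w j" using oE_inj y by blast
    then show "X w j \<in> set (sfr n ps k)" using y by simp
  qed
  have "leftpos cp EE (frontier cp EE k) w = Min ((\<lambda>j. P k (X w j)) ` {..<cnt n w})"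
  proof -
    have "(\<lambda>e. pos e (frontier cp EE k)) ` set (ins cp EE w) = (\<lambda>j. P k (X w j)) ` {..<cnt n w}"
    proof -
      have "pos (oE (X w j)) (map oE (sfr n ps k)) = P k (X w j)" if "j < cnt n w" for j
        using pos_map[OF map_oE_distinct[of k]] k av that by simp
      then show ?thesis unfolding insw F by (force simp: consl_def image_iff)
    qed
    then show ?thesis by (simp add: leftpos_def)
  qed
  moreover have "ps!k < Min ((\<lambda>j. P k (X w j)) ` {..<cnt n w})"
  proof -
    have "0 \<in> {..<cnt n w}" using cnt_pos[of w] by simp
    then have ne: "{..<cnt n w} \<noteq> {}" by blast
    show ?thesis using KL[OF k w2(1,2) av] ne by (subst Min_gr_iff) auto
  qed
  ultimately show "leftpos cp EE (frontier cp EE k) (Suc k) < leftpos cp EE (frontier cp EE k) w"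
    using leftpos_own[OF k] by simp
qed

lemma bE_in: "buildE n ps \<in> PC_coprod_first n"
  unfolding PC_coprod_first_def using PC_bE canon_bE by simp

lemma ps_recover: "map (\<lambda>k. leftpos cp EE (frontier cp EE k) (Suc k)) [0..<2*n] = ps"
  by (rule nth_equalityI) (simp_all add: leftpos_own ps_len[OF n1 LRps])

end


context
  fixes n :: nat and E :: "pedge set"
  assumes n1: "n \<ge> 1" and EP: "is_PC_prograph n (\<lambda>v. v \<le> n) E"
    and CL: "canonically_labelled n (\<lambda>v. v \<le> n) E"
begin

abbreviation "cq \<equiv> (\<lambda>v::nat. v \<le> n)"

lemma EPs:
  "\<forall>e\<in>E. outSlot n cq (fst e) \<and> inSlot n cq (snd e)"
  "\<forall>s. outSlot n cq s \<longrightarrow> (\<exists>!e. e \<in> E \<and> fst e = s)"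
  "\<forall>s. inSlot n cq s \<longrightarrow> (\<exists>!e. e \<in> E \<and> snd e = s)"
  "upward_planar n cq E"
  using EP unfolding is_PC_prograph_def by auto

lemma outE: "outSlot n cq s \<Longrightarrow> outEdge E (fst s) (snd s) \<in> E \<and> fst (outEdge E (fst s) (snd s)) = s"
proof -
  assume s: "outSlot n cq s"
  have "\<exists>!e. e \<in> E \<and> fst e = (fst s, snd s)" using EPs(2)[rule_format, OF s] by simp
  then show ?thesis unfolding outEdge_def by (metis (mono_tags, lifting) prod.collapse theI')
qed

lemma inE: "inSlot n cq s \<Longrightarrow> inEdge E (fst s) (snd s) \<in> E \<and> snd (inEdge E (fst s) (snd s)) = s"
proof -
  assume s: "inSlot n cq s"
  have "\<exists>!e. e \<in> E \<and> snd e = (fst s, snd s)" using EPs(3)[rule_format, OF s] by simp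
  then show ?thesis unfolding inEdge_def by (metis (mono_tags, lifting) prod.collapse theI')
qed

lemma E_inEdge: "e \<in> E \<Longrightarrow> e = inEdge E (fst (snd e)) (snd (snd e))"
proof -
  assume e: "e \<in> E"
  have s: "inSlot n cq (snd e)" using EPs(1) e by auto
  have "inEdge E (fst (snd e)) (snd (snd e)) \<in> E \<and> snd (inEdge E (fst (snd e)) (snd (snd e))) = snd e"
    using inE[OF s] by simp
  then show ?thesis using EPs(3) s e by metis
qed

lemma inslot_v': "1 \<le> v \<Longrightarrow> v \<le> 2*n \<Longrightarrow> j < cnt n v \<Longrightarrow> inSlot n cq (v, j)"
  by (auto simp: inSlot_def verts_def cnt_def)

lemma outslot_v': "1 \<le> v \<Longrightarrow> v \<le> 2*n \<Longrightarrow> i < 3 - cnt n v \<Longrightarrow> outSlot n cq (v, i)"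
  by (auto simp: outSlot_def verts_def cnt_def)

lemma ins_E: "ins cq E v = map (\<lambda>j. inEdge E v j) [0..<cnt n v]"
  by (simp add: ins_def cnt_def numeral_2_eq_2 upt_rec)

lemma outs_E: "outs cq E v = map (\<lambda>i. outEdge E v i) [0..<3 - cnt n v]"
  by (simp add: outs_def cnt_def numeral_2_eq_2 upt_rec)

lemma wfE: "u \<in> verts n \<Longrightarrow> ins cq E u \<noteq> [] \<and> outs cq E u \<noteq> [] \<and> (\<forall>e\<in>set (outs cq E u). fst (fst e) = u)"
proof -
  assume u: "u \<in> verts n"
  have "fst (outEdge E u i) = (u, i)" if "i < 3 - cnt n u" for i
    using outE[OF outslot_v'[of u i]] u that by (simp add: verts_def)
  then show ?thesis by (auto simp: ins_def outs_def outs_E cnt_def)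
qed

lemma outs_fst: "u \<in> verts n \<Longrightarrow> map fst (outs cq E u) = newS n u"
proof -
  assume u: "u \<in> verts n"
  have "fst (outEdge E u i) = (u, i)" if "i < 3 - cnt n u" for i
    using outE[OF outslot_v'[of u i]] u that by (simp add: verts_def)
  then show ?thesis by (simp add: outs_E newS_def cnt_def numeral_2_eq_2 upt_rec)
qed

lemma outs_distinct: "u \<in> verts n \<Longrightarrow> distinct (outs cq E u)"
  using outs_fst[of u] distinct_newS[of n u] by (metis distinct_map)

lemma ins_snd: "u \<in> verts n \<Longrightarrow> e \<in> set (ins cq E u) \<Longrightarrow> fst (snd e) = u"
proof -
  assume u: "u \<in> verts n" and e: "e \<in> set (ins cq E u)"
  then obtain j where j: "j < cnt n u" "e = inEdge E u j" by (auto simp: ins_E)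
  then show ?thesis using inE[OF inslot_v'[of u j]] u by (simp add: verts_def)
qed

lemma disjE': "u \<in> verts n \<Longrightarrow> w \<in> verts n \<Longrightarrow> u \<noteq> w \<Longrightarrow> set (ins cq E u) \<inter> set (ins cq E w) = {}"
  using ins_snd by blast

definition Inv :: "nat \<Rightarrow> bool" where
  "Inv k = ((\<exists>vs. distinct vs \<and> set vs = {Suc k..2*n} \<and> sweeps cq E (frontier cq E k) vs [globalOut E]) \<and>
            distinct (frontier cq E k) \<and> (\<forall>e\<in>set (frontier cq E k). fst (fst e) \<notin> {Suc k..2*n}))"

lemma globalIn_fst: "fst (globalIn E) = (0,0)"
  using outE[of "(0,0)"] by (simp add: globalIn_def outSlot_def)

lemma Inv0: "Inv 0"
proof -
  obtain vs where vs: "distinct vs" "set vs = verts n" "sweeps cq E [globalIn E] vs [globalOut E]"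
    using EPs(4) unfolding upward_planar_def by blast
  have "set vs = {Suc 0..2*n}" using vs(2) by (simp add: verts_def)
  then show ?thesis unfolding Inv_def using vs globalIn_fst by auto
qed

lemma Inv_step:
  assumes k: "k < 2*n" and I: "Inv k"
  shows "\<exists>A B. frontier cq E k = A @ ins cq E (Suc k) @ B \<and> frontier cq E (Suc k) = A @ outs cq E (Suc k) @ B
           \<and> Inv (Suc k)"
proof -
  obtain vs where vs: "distinct vs" "set vs = {Suc k..2*n}" "sweeps cq E (frontier cq E k) vs [globalOut E]"
    using I unfolding Inv_def by blast
  have dF: "distinct (frontier cq E k)" and srcF: "\<forall>e\<in>set (frontier cq E k). fst (fst e) \<notin> {Suc k..2*n}"
    using I unfolding Inv_def by auto
  have av: "set (ins cq E (Suc k)) \<subseteq> set (frontier cq E k)"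
    using CL k unfolding canonically_labelled_def available_def by blast
  have sub: "set vs \<subseteq> verts n" using vs(2) by (auto simp: verts_def)
  have vin: "Suc k \<in> set vs" using vs(2) k by simp
  obtain A B where AB: "frontier cq E k = A @ ins cq E (Suc k) @ B"
    and sw: "sweeps cq E (A @ outs cq E (Suc k) @ B) (remove1 (Suc k) vs) [globalOut E]"
    using sweeps_commute[OF vs(3), of "verts n", OF wfE disjE' sub vin vs(1) av] srcF vs(2) by auto
  have kv: "Suc k \<in> verts n" using k by (simp add: verts_def)
  have Cne: "ins cq E (Suc k) \<noteq> []" using wfE[OF kv] by simp
  have "frontier cq E (Suc k) = A @ outs cq E (Suc k) @ B"
    using min_pos_block[of A "ins cq E (Suc k)" B] dF AB Cne by (simp add: frontier_step_def Let_def)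
  moreover have "Inv (Suc k)"
  proof -
    have s1a: "distinct (remove1 (Suc k) vs)" using vs(1) by simp
    have "set (remove1 (Suc k) vs) = {Suc k..2*n} - {Suc k}" using vs(1,2) by (simp add: set_remove1_eq)
    also have "\<dots> = {Suc (Suc k)..2*n}" by auto
    finally have s1: "distinct (remove1 (Suc k) vs)" "set (remove1 (Suc k) vs) = {Suc (Suc k)..2*n}"
      using s1a by auto
    have oo: "\<forall>e\<in>set (outs cq E (Suc k)). fst (fst e) = Suc k" using wfE[OF kv] by simp
    have dAB: "distinct A" "distinct B" "set A \<inter> set B = {}" using dF AB by auto
    have sA: "\<forall>e\<in>set A \<union> set B. fst (fst e) \<notin> {Suc k..2*n}" using srcF AB by auto
    have skin: "Suc k \<in> {Suc k..2*n}" using k by simp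
    have nx: "e \<notin> set (outs cq E (Suc k))" if "e \<in> set A \<union> set B" for e
    proof
      assume "e \<in> set (outs cq E (Suc k))"
      then have "fst (fst e) = Suc k" using oo by blast
      moreover have "fst (fst e) \<notin> {Suc k..2*n}" using sA that by blast
      ultimately show False using skin by simp
    qed
    have i1: "set A \<inter> set (outs cq E (Suc k)) = {}" using nx by blast
    have i2: "set (outs cq E (Suc k)) \<inter> set B = {}" using nx by blast
    have d2: "distinct (A @ outs cq E (Suc k) @ B)"
      using dAB outs_distinct[OF kv] i1 i2 by auto
    have s2: "\<forall>e\<in>set (A @ outs cq E (Suc k) @ B). fst (fst e) \<notin> {Suc (Suc k)..2*n}"
    proof
      fix e assume "e \<in> set (A @ outs cq E (Suc k) @ B)"
      then consider "e \<in> set A \<union> set B" | "e \<in> set (outs cq E (Suc k))" by auto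
      then show "fst (fst e) \<notin> {Suc (Suc k)..2*n}"
      proof cases
        case 1
        then have "fst (fst e) \<notin> {Suc k..2*n}" using sA by blast
        then show ?thesis by auto
      next
        case 2
        then show ?thesis using oo by auto
      qed
    qed
    show ?thesis unfolding Inv_def using s1 sw d2 s2 \<open>frontier cq E (Suc k) = _\<close> by auto
  qed
  ultimately show ?thesis using AB by blast
qed

lemma Inv_all: "k \<le> 2*n \<Longrightarrow> Inv k"
proof (induction k)
  case 0
  then show ?case using Inv0 by simp
next
  case (Suc k)
  then show ?case using Inv_step[of k] by auto
qed

lemma decomp: "k < 2*n \<Longrightarrow> \<exists>A B. frontier cq E k = A @ ins cq E (Suc k) @ B \<and> frontier cq E (Suc k) = A @ outs cq E (Suc k) @ B"
  using Inv_step Inv_all by (meson less_imp_le)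

definition psE :: "nat list" where
  "psE = map (\<lambda>k. leftpos cq E (frontier cq E k) (Suc k)) [0..<2*n]"

lemma psE_len: "length psE = 2*n" by (simp add: psE_def)

lemma decomp_pos: "k < 2*n \<Longrightarrow> \<exists>A B. frontier cq E k = A @ ins cq E (Suc k) @ B \<and>
    frontier cq E (Suc k) = A @ outs cq E (Suc k) @ B \<and> length A = psE!k"
proof -
  assume k: "k < 2*n"
  obtain A B where AB: "frontier cq E k = A @ ins cq E (Suc k) @ B" "frontier cq E (Suc k) = A @ outs cq E (Suc k) @ B"
    using decomp[OF k] by blast
  have d: "distinct (frontier cq E k)" using Inv_all[of k] k by (simp add: Inv_def)
  have kv: "Suc k \<in> verts n" using k by (simp add: verts_def)
  have Cne: "ins cq E (Suc k) \<noteq> []" using wfE[OF kv] by simp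
  have "leftpos cq E (frontier cq E k) (Suc k) = length A"
    unfolding leftpos_def AB(1) using min_pos_block[of A "ins cq E (Suc k)" B] d AB(1) Cne by simp
  then have "length A = psE!k" using k by (simp add: psE_def)
  then show ?thesis using AB by blast
qed

lemma len_ins: "length (ins cq E v) = cnt n v" by (simp add: ins_E)
lemma len_outs: "length (outs cq E v) = 3 - cnt n v" by (simp add: outs_E)

lemma len_front: "k \<le> 2*n \<Longrightarrow> length (frontier cq E k) = flen n k"
proof (induction k)
  case 0
  then show ?case by (simp add: flen_def)
next
  case (Suc k)
  then have k: "k < 2*n" by simp
  obtain A B where AB: "frontier cq E k = A @ ins cq E (Suc k) @ B" "frontier cq E (Suc k) = A @ outs cq E (Suc k) @ B"
    using decomp[OF k] by blast
  have "length (frontier cq E (Suc k)) = length (frontier cq E k) + 3 - 2 * cnt n (Suc k)"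
    using AB len_ins len_outs by (simp add: cnt_def)
  then show ?case using Suc k by (simp add: flen_def cnt_def split: if_splits)
qed

lemma fst_front: "k \<le> 2*n \<Longrightarrow> map fst (frontier cq E k) = sfr n psE k"
proof (induction k)
  case 0
  then show ?case using globalIn_fst by simp
next
  case (Suc k)
  then have k: "k < 2*n" by simp
  obtain A B where AB: "frontier cq E k = A @ ins cq E (Suc k) @ B" "frontier cq E (Suc k) = A @ outs cq E (Suc k) @ B"
    "length A = psE!k"
    using decomp_pos[OF k] by blast
  have kv: "Suc k \<in> verts n" using k by (simp add: verts_def)
  have S: "sfr n psE k = map fst A @ map fst (ins cq E (Suc k)) @ map fst B" using Suc AB by simp
  have "sfr n psE (Suc k) = map fst A @ newS n (Suc k) @ map fst B"
    using S AB(3) len_ins[of "Suc k"] by simp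
  then show ?case using AB(2) outs_fst[OF kv] by simp
qed

lemma sweeps_nil: "sweeps cop E' F [] G \<Longrightarrow> F = G"
  by (erule sweeps.cases) auto

lemma front_final: "frontier cq E (2*n) = [globalOut E]"
proof -
  obtain vs where "distinct vs" "set vs = {Suc (2*n)..2*n}" "sweeps cq E (frontier cq E (2*n)) vs [globalOut E]"
    using Inv_all[of "2*n"] by (auto simp: Inv_def)
  then show ?thesis using sweeps_nil by fastforce
qed

lemma inEdge_src: "inSlot n cq t \<Longrightarrow> fst (inEdge E (fst t) (snd t)) = srcOf n psE t"
proof -
  assume t: "inSlot n cq t"
  show ?thesis
  proof (cases "fst t = 0")
    case True
    then have "fst t = 0 \<and> snd t = 0" using t by (auto simp: inSlot_def verts_def)
    then have t0: "t = (0,0)" by (cases t) auto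
    have "map fst (frontier cq E (2*n)) = sfr n psE (2*n)" using fst_front by simp
    then have "sfr n psE (2*n) = [fst (globalOut E)]" using front_final by simp
    then show ?thesis using t0 by (simp add: srcOf_def globalOut_def)
  next
    case False
    then have v: "1 \<le> fst t" "fst t \<le> 2*n" "snd t < cnt n (fst t)"
      using t by (auto simp: inSlot_def verts_def cnt_def split: if_splits)
    have lt: "fst t - 1 < 2*n" and sc: "Suc (fst t - 1) = fst t" using v by auto
    obtain A B where AB: "frontier cq E (fst t - 1) = A @ ins cq E (fst t) @ B" "length A = psE!(fst t - 1)"
      using decomp_pos[OF lt] unfolding sc by blast
    have "frontier cq E (fst t - 1) ! (psE!(fst t - 1) + snd t) = ins cq E (fst t) ! snd t"
      using AB v len_ins[of "fst t"] by (simp add: nth_append)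
    also have "\<dots> = inEdge E (fst t) (snd t)" using v by (simp add: ins_E)
    finally have e: "frontier cq E (fst t - 1) ! (psE!(fst t - 1) + snd t) = inEdge E (fst t) (snd t)" .
    have l: "psE!(fst t - 1) + snd t < length (frontier cq E (fst t - 1))"
      using AB v len_ins[of "fst t"] by simp
    have "sfr n psE (fst t - 1) ! (psE!(fst t - 1) + snd t) = fst (inEdge E (fst t) (snd t))"
      using fst_front[of "fst t - 1"] v e l by (metis diff_le_self le_trans nth_map)
    then show ?thesis using False by (simp add: srcOf_def)
  qed
qed

lemma E_eq: "E = buildE n psE"
proof
  show "E \<subseteq> buildE n psE"
  proof
    fix e assume e: "e \<in> E"
    have t: "inSlot n cq (snd e)" using EPs(1) e by auto
    have "e = inEdge E (fst (snd e)) (snd (snd e))" using E_inEdge[OF e] .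
    then have "fst e = srcOf n psE (snd e)" using inEdge_src[OF t] by simp
    then have ee: "e = (srcOf n psE (snd e), snd e)" by (cases e) simp
    show "e \<in> buildE n psE" unfolding buildE_def by (rule image_eqI[where x="snd e"]) (use ee t in auto)
  qed
next
  show "buildE n psE \<subseteq> E"
  proof
    fix e assume "e \<in> buildE n psE"
    then obtain t where t: "inSlot n cq t" "e = (srcOf n psE t, t)" unfolding buildE_def by blast
    have "inEdge E (fst t) (snd t) \<in> E \<and> snd (inEdge E (fst t) (snd t)) = t" using inE[OF t(1)] .
    moreover have "fst (inEdge E (fst t) (snd t)) = srcOf n psE t" using inEdge_src[OF t(1)] .
    ultimately show "e \<in> E" using t(2) by (metis prod.collapse)
  qed
qed

lemma psE_LR: "psE \<in> LR n"
  unfolding LR_def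
proof (intro CollectI conjI allI impI)
  show "length psE = 2*n" by (rule psE_len)
  fix k
  assume k: "k < 2*n"
  obtain A B where AB: "frontier cq E k = A @ ins cq E (Suc k) @ B" "length A = psE!k"
    using decomp_pos[OF k] by blast
  show "psE!k + cnt n (Suc k) \<le> flen n k"
    using len_front[of k] k AB len_ins[of "Suc k"] by simp
next
  fix k assume k: "Suc k < 2*n"
  show "psE!k + 1 \<le> psE!(Suc k) + cnt n (Suc (Suc k))"
  proof (rule ccontr)
    assume c: "\<not> ?thesis"
    obtain A B where AB: "frontier cq E k = A @ ins cq E (Suc k) @ B"
      "frontier cq E (Suc k) = A @ outs cq E (Suc k) @ B" "length A = psE!k"
      using decomp_pos[of k] k by auto
    obtain A' B' where AB': "frontier cq E (Suc k) = A' @ ins cq E (Suc (Suc k)) @ B'" "length A' = psE!(Suc k)"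
      using decomp_pos[of "Suc k"] k by auto
    let ?I = "ins cq E (Suc (Suc k))"
    have lt: "length A' + length ?I \<le> length A" using c AB(3) AB'(2) len_ins by simp
    have "take (length A' + length ?I) (frontier cq E (Suc k)) = A' @ ?I" using AB'(1) by simp
    moreover have "take (length A' + length ?I) (frontier cq E (Suc k)) = take (length A' + length ?I) A"
      using AB(2) lt by simp
    ultimately have "A = A' @ ?I @ drop (length A' + length ?I) A"
      by (metis append_assoc append_take_drop_id)
    then have F: "frontier cq E k = A' @ ?I @ (drop (length A' + length ?I) A @ ins cq E (Suc k) @ B)"
      using AB(1) by (metis append_assoc)
    have d: "distinct (frontier cq E k)" using Inv_all[of k] k by (simp add: Inv_def)
    have kv: "Suc (Suc k) \<in> verts n" using k by (simp add: verts_def)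
    have Ine: "?I \<noteq> []" using wfE[OF kv] by simp
    have avail: "available n cq E k (Suc (Suc k))"
      unfolding available_def using kv F by auto
    have "leftpos cq E (frontier cq E k) (Suc k) < leftpos cq E (frontier cq E k) (Suc (Suc k))"
      using CL k avail unfolding canonically_labelled_def by auto
    moreover have "leftpos cq E (frontier cq E k) (Suc k) = length A"
      using AB(3) k by (simp add: psE_def)
    moreover have "leftpos cq E (frontier cq E k) (Suc (Suc k)) = length A'"
    proof -
      let ?D = "drop (length A' + length ?I) A @ ins cq E (Suc k) @ B"
      have "distinct (A' @ ?I @ ?D)" using d F by simp
      then show ?thesis unfolding leftpos_def F using min_pos_block[of A' ?I ?D] Ine by simp
    qed
    ultimately show False using lt Ine by simp
  qed
qed

end


definition Pcf :: "nat \<Rightarrow> nat list set" where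
  "Pcf n = {p. length p = n \<and> (\<forall>k<n. p!k \<le> k) \<and> (\<forall>k. Suc k < n \<longrightarrow> p!k \<le> p!Suc k)}"

definition Mset :: "nat \<Rightarrow> nat list set" where
  "Mset n = {m. length m = n \<and> (\<forall>j<n. m!j + j + 1 \<le> n) \<and> (\<forall>j. Suc j < n \<longrightarrow> m!j \<le> m!Suc j + 1)}"

definition qmap :: "nat \<Rightarrow> nat list \<Rightarrow> nat list" where
  "qmap n m = map (\<lambda>i. i - m!(n - 1 - i)) [0..<n]"

lemma finite_Pcf: "finite (Pcf n)"
proof -
  have "Pcf n \<subseteq> {xs. set xs \<subseteq> {..n} \<and> length xs = n}"
    by (auto simp: Pcf_def in_set_conv_nth) (metis le_trans less_imp_le_nat)
  moreover have "finite {xs. set xs \<subseteq> {..n} \<and> length xs = n}"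
    by (rule finite_lists_length_eq) simp
  ultimately show ?thesis by (rule finite_subset)
qed

lemma qmap_inj: "inj_on (qmap n) (Mset n)"
proof (rule inj_onI)
  fix m m' assume m: "m \<in> Mset n" and m': "m' \<in> Mset n" and e: "qmap n m = qmap n m'"
  show "m = m'"
  proof (rule nth_equalityI)
    show "length m = length m'" using m m' by (simp add: Mset_def)
    fix j assume j: "j < length m"
    then have jn: "j < n" using m by (simp add: Mset_def)
    let ?i = "n - 1 - j"
    have "qmap n m ! ?i = qmap n m' ! ?i" using e by simp
    then have "?i - m!(n - 1 - ?i) = ?i - m'!(n - 1 - ?i)" using jn by (simp add: qmap_def)
    moreover have "n - 1 - ?i = j" using jn by simp
    moreover have "m!j \<le> ?i" "m'!j \<le> ?i" using m m' jn by (auto simp: Mset_def)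
    ultimately show "m!j = m'!j" by simp
  qed
qed

lemma aux_sub: "b \<le> a + 1 \<Longrightarrow> a \<le> k \<Longrightarrow> b \<le> Suc k \<Longrightarrow> k - a \<le> Suc k - (b::nat)" by arith

lemma aux2: "B \<le> A \<Longrightarrow> A \<le> N \<Longrightarrow> B \<le> N - 1 \<Longrightarrow> 1 \<le> N \<Longrightarrow> N - A \<le> (N - 1 - B) + (1::nat)" by arith

lemma qmap_img: "qmap n ` Mset n = Pcf n"
proof
  show "qmap n ` Mset n \<subseteq> Pcf n"
  proof
    fix q assume "q \<in> qmap n ` Mset n"
    then obtain m where m: "m \<in> Mset n" "q = qmap n m" by blast
    have b: "\<And>j. j < n \<Longrightarrow> m!j + j + 1 \<le> n" and l: "\<And>j. Suc j < n \<Longrightarrow> m!j \<le> m!Suc j + 1"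
      using m(1) by (auto simp: Mset_def)
    have "q!k \<le> q!Suc k" if k: "Suc k < n" for k
    proof -
      have "q!k = k - m!(n-1-k)" "q!Suc k = Suc k - m!(n-1-Suc k)" using k m(2) by (auto simp: qmap_def)
      moreover have "m!(n-1-Suc k) \<le> m!(n-1-k) + 1"
        using l[of "n-1-Suc k"] k by (simp add: Suc_diff_Suc)
      moreover have "m!(n-1-k) \<le> k" using b[of "n-1-k"] k by simp
      moreover have "m!(n-1-Suc k) \<le> Suc k" using b[of "n-1-Suc k"] k by simp
      ultimately show ?thesis using aux_sub by metis
    qed
    then show "q \<in> Pcf n" using m(2) by (auto simp: Pcf_def qmap_def)
  qed
next
  show "Pcf n \<subseteq> qmap n ` Mset n"
  proof
    fix q assume q: "q \<in> Pcf n"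
    have qb: "\<And>k. k < n \<Longrightarrow> q!k \<le> k" and qs: "\<And>k. Suc k < n \<Longrightarrow> q!k \<le> q!Suc k" and ql: "length q = n"
      using q by (auto simp: Pcf_def)
    let ?m = "map (\<lambda>j. (n - 1 - j) - q!(n - 1 - j)) [0..<n]"
    have mM: "?m \<in> Mset n"
    proof -
      have "?m!j \<le> ?m!Suc j + 1" if j: "Suc j < n" for j
      proof -
        have "q!(n - 1 - Suc j) \<le> q!(n - 1 - j)" using qs[of "n - 1 - Suc j"] j by (simp add: Suc_diff_Suc)
        moreover have "q!(n-1-j) \<le> n-1-j" "q!(n-1-Suc j) \<le> n-1-Suc j" using qb j by auto
        moreover have eqj: "n - 1 - Suc j = (n - 1 - j) - 1" and "1 \<le> n - 1 - j" using j by auto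
        ultimately have "(n - 1 - j) - q!(n - 1 - j) \<le> ((n - 1 - j) - 1 - q!(n - 1 - Suc j)) + 1"
          by (intro aux2) simp_all
        then have "(n - 1 - j) - q!(n - 1 - j) \<le> ((n - 1 - Suc j) - q!(n - 1 - Suc j)) + 1"
          by (simp only: eqj)
        then show ?thesis using j by simp
      qed
      then show ?thesis by (auto simp: Mset_def)
    qed
    have qm: "qmap n ?m = q"
    proof (rule nth_equalityI)
      show "length (qmap n ?m) = length q" using ql by (simp add: qmap_def)
      fix i assume "i < length (qmap n ?m)"
      then have i: "i < n" by (simp add: qmap_def)
      have "qmap n ?m ! i = i - ((n - 1 - (n - 1 - i)) - q!(n - 1 - (n - 1 - i)))" using i by (simp add: qmap_def)
      also have "n - 1 - (n - 1 - i) = i" using i by simp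
      finally show "qmap n ?m ! i = q!i" using qb[OF i] by simp
    qed
    show "q \<in> qmap n ` Mset n"
      by (rule image_eqI[of q "qmap n" ?m]) (use qm mM in simp_all)
  qed
qed

lemma qmap_last: "m \<in> Mset n \<Longrightarrow> n \<ge> 1 \<Longrightarrow> qmap n m ! (n - 1) = n - 1 - m!0"
  unfolding qmap_def by (subst nth_map) auto

definition Np :: "nat \<Rightarrow> nat \<Rightarrow> nat" where
  "Np n d = card {p \<in> Pcf n. p!(n - 1) = d}"

lemma Pcf_snoc_set:
  assumes n: "n \<ge> 1" and i: "i \<le> n"
  shows "{p \<in> Pcf (Suc n). p!n = i} = (\<lambda>p. p @ [i]) ` {p \<in> Pcf n. p!(n - 1) \<le> i}"
proof
  show "(\<lambda>p. p @ [i]) ` {p \<in> Pcf n. p!(n - 1) \<le> i} \<subseteq> {p \<in> Pcf (Suc n). p!n = i}"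
  proof
    fix x assume "x \<in> (\<lambda>p. p @ [i]) ` {p \<in> Pcf n. p!(n - 1) \<le> i}"
    then obtain p where p: "p \<in> Pcf n" "p!(n-1) \<le> i" "x = p @ [i]" by blast
    have lp: "length p = n" using p(1) by (simp add: Pcf_def)
    have "x!k \<le> k" if "k < Suc n" for k
      using p lp i that by (cases "k < n") (auto simp: Pcf_def nth_append)
    moreover have "x!k \<le> x!Suc k" if "Suc k < Suc n" for k
    proof (cases "Suc k < n")
      case True
      then show ?thesis using p lp by (auto simp: Pcf_def nth_append)
    next
      case False
      then have "k = n - 1" using that n by simp
      then show ?thesis using p lp n by (auto simp: nth_append)
    qed
    ultimately show "x \<in> {p \<in> Pcf (Suc n). p!n = i}" using p lp by (auto simp: Pcf_def nth_append)
  qed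
next
  show "{p \<in> Pcf (Suc n). p!n = i} \<subseteq> (\<lambda>p. p @ [i]) ` {p \<in> Pcf n. p!(n - 1) \<le> i}"
  proof
    fix x assume x: "x \<in> {p \<in> Pcf (Suc n). p!n = i}"
    then have lx: "length x = Suc n" by (simp add: Pcf_def)
    let ?p = "take n x"
    have xe: "x = ?p @ [i]" using take_Suc_conv_app_nth[of n x] lx x by simp
    have "?p \<in> Pcf n" using x lx by (auto simp: Pcf_def)
    moreover have "?p!(n-1) \<le> i"
    proof -
      have al: "\<forall>k. Suc k < Suc n \<longrightarrow> x!k \<le> x!Suc k" using x by (simp add: Pcf_def)
      have "Suc (n-1) < Suc n" using n by simp
      then have "x!(n-1) \<le> x!Suc (n-1)" using al by blast
      then show ?thesis using x n by simp
    qed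
    ultimately show "x \<in> (\<lambda>p. p @ [i]) ` {p \<in> Pcf n. p!(n - 1) \<le> i}" using xe by blast
  qed
qed

lemma Np_rec: "n \<ge> 1 \<Longrightarrow> i \<le> n \<Longrightarrow> Np (Suc n) i = (\<Sum>d\<le>i. Np n d)"
proof -
  assume n: "n \<ge> 1" and i: "i \<le> n"
  have "Np (Suc n) i = card {p \<in> Pcf n. p!(n - 1) \<le> i}"
    unfolding Np_def using Pcf_snoc_set[OF n i]
    by (simp add: card_image inj_on_def)
  also have "{p \<in> Pcf n. p!(n - 1) \<le> i} = (\<Union>d\<in>{..i}. {p \<in> Pcf n. p!(n - 1) = d})" by auto
  also have "card \<dots> = (\<Sum>d\<le>i. Np n d)"
    unfolding Np_def by (rule card_UN_disjoint) (auto intro: finite_subset[OF _ finite_Pcf[of n]])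
  finally show ?thesis .
qed

lemma Np_zero: "i > n \<Longrightarrow> Np (Suc n) i = 0"
proof -
  assume i: "i > n"
  have "{p \<in> Pcf (Suc n). p!n = i} = {}" using i by (auto simp: Pcf_def)
  then show ?thesis unfolding Np_def by (simp only: card.empty diff_Suc_1)
qed

lemma Pcf1: "Pcf (Suc 0) = {[0]}"
  by (auto simp: Pcf_def length_Suc_conv)

lemma Np_Cb: "d \<le> Suc n \<Longrightarrow> int (Np (Suc n) d) = Cb n d"
proof (rule count_rec[where N = Np])
  have e: "{p \<in> Pcf (Suc 0). p ! 0 = 0} = {[0]}" by (rule set_eqI) (auto simp: Pcf1)
  show "Np (Suc 0) 0 = 1" by (simp add: Np_def e)
  show "Np (Suc 0) i = 0" if "i > 0" for i using Np_zero that by simp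
  show "Np (Suc n) i = (\<Sum>d\<le>i. Np n d)" if "n \<ge> 1" "i \<le> n" for n i using Np_rec that by simp
  show "Np (Suc n) i = 0" if "n \<ge> 1" "i > n" for n i using Np_zero that by simp
  show "(\<Sum>j\<le>k. Cb m j) = Cb (Suc m) k" for m k by (rule Cb_partial)
qed


lemma cnt_le: "v \<le> n \<Longrightarrow> cnt n v = 1" and cnt_gt: "\<not> v \<le> n \<Longrightarrow> cnt n v = 2"
  by (simp_all add: cnt_def)

lemma LR_char:
  assumes n: "n \<ge> 1"
  shows "ps \<in> LR n \<longleftrightarrow> length ps = 2*n \<and> take n ps \<in> Pcf n \<and> drop n ps \<in> Mset n \<and> ps!(n-1) \<le> ps!n + 1"
proof
  assume L: "ps \<in> LR n"
  have len: "length ps = 2*n" and bd: "\<And>k. k < 2*n \<Longrightarrow> ps!k + cnt n (Suc k) \<le> flen n k"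
    and lc: "\<And>k. Suc k < 2*n \<Longrightarrow> ps!k + 1 \<le> ps!(Suc k) + cnt n (Suc (Suc k))"
    using L by (auto simp: LR_def)
  have "take n ps \<in> Pcf n"
  proof -
    have "ps!k \<le> k" if "k < n" for k using bd[of k] that by (simp add: cnt_le flen_def)
    moreover have "ps!k \<le> ps!Suc k" if "Suc k < n" for k using lc[of k] that by (simp add: cnt_le)
    ultimately show ?thesis using len by (auto simp: Pcf_def)
  qed
  moreover have "drop n ps \<in> Mset n"
  proof -
    have "ps!(n+j) + j + 1 \<le> n" if "j < n" for j
      using bd[of "n+j"] that by (simp add: cnt_gt flen_def split: if_splits)
    moreover have "ps!(n+j) \<le> ps!(n + Suc j) + 1" if "Suc j < n" for j
      using lc[of "n+j"] that by (simp add: cnt_gt)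
    ultimately show ?thesis using len by (auto simp: Mset_def)
  qed
  moreover have "ps!(n-1) \<le> ps!n + 1" using lc[of "n-1"] n by (simp add: cnt_gt)
  ultimately show "length ps = 2*n \<and> take n ps \<in> Pcf n \<and> drop n ps \<in> Mset n \<and> ps!(n-1) \<le> ps!n + 1"
    using len by simp
next
  assume R: "length ps = 2*n \<and> take n ps \<in> Pcf n \<and> drop n ps \<in> Mset n \<and> ps!(n-1) \<le> ps!n + 1"
  have len: "length ps = 2*n" using R by simp
  have p1: "\<And>k. k < n \<Longrightarrow> ps!k \<le> k" and p2: "\<And>k. Suc k < n \<Longrightarrow> ps!k \<le> ps!Suc k"
    using R by (auto simp: Pcf_def)
  have m1: "\<And>j. j < n \<Longrightarrow> ps!(n+j) + j + 1 \<le> n" and m2: "\<And>j. Suc j < n \<Longrightarrow> ps!(n+j) \<le> ps!(n + Suc j) + 1"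
    using R len by (auto simp: Mset_def)
  have tr: "ps!(n-1) \<le> ps!n + 1" using R by simp
  have "ps!k + cnt n (Suc k) \<le> flen n k" if k: "k < 2*n" for k
  proof (cases "k < n")
    case True
    then show ?thesis using p1[of k] by (simp add: cnt_le flen_def)
  next
    case False
    then obtain j where j: "k = n + j" "j < n" using k by (metis add_diff_inverse_nat add_less_imp_less_left mult_2)
    have b: "ps!(n+j) + j + 1 \<le> n" using m1 j by simp
    have c: "cnt n (Suc k) = 2" using j by (simp add: cnt_gt)
    have fl: "flen n k = n + 1 - j" using j by (auto simp: flen_def)
    show ?thesis using b c fl j by simp
  qed
  moreover have "ps!k + 1 \<le> ps!(Suc k) + cnt n (Suc (Suc k))" if k: "Suc k < 2*n" for k
  proof (cases "Suc k < n")
    case True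
    then show ?thesis using p2[of k] by (simp add: cnt_le)
  next
    case False
    show ?thesis
    proof (cases "k < n")
      case True
      then have "k = n - 1" using False by simp
      then show ?thesis using tr n by (simp add: cnt_gt)
    next
      case False
      then obtain j where j: "k = n + j" using k by (metis le_add_diff_inverse not_less)
      then have "Suc j < n" using k by simp
      then show ?thesis using m2[of j] j by (simp add: cnt_gt)
    qed
  qed
  ultimately show "ps \<in> LR n" using len by (simp add: LR_def)
qed


lemma card_LR:
  assumes n: "n \<ge> 1"
  shows "card (LR n) = card {(p, q). p \<in> Pcf n \<and> q \<in> Pcf n \<and> p!(n-1) + q!(n-1) \<le> n}"
proof (rule bij_betw_same_card[of "\<lambda>ps. (take n ps, qmap n (drop n ps))"])
  let ?f = "\<lambda>ps. (take n ps, qmap n (drop n ps))"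
  show "bij_betw ?f (LR n) {(p, q). p \<in> Pcf n \<and> q \<in> Pcf n \<and> p!(n-1) + q!(n-1) \<le> n}"
  proof (rule bij_betwI')
    fix x y assume x: "x \<in> LR n" and y: "y \<in> LR n"
    show "(?f x = ?f y) = (x = y)"
    proof
      assume e: "?f x = ?f y"
      have "drop n x = drop n y"
        using inj_onD[OF qmap_inj[of n]] e x y by (simp add: LR_char[OF n])
      moreover have "take n x = take n y" using e by simp
      ultimately show "x = y" by (metis append_take_drop_id)
    qed simp
  next
    fix x assume x: "x \<in> LR n"
    have c: "length x = 2*n" "take n x \<in> Pcf n" "drop n x \<in> Mset n" "x!(n-1) \<le> x!n + 1"
      using x LR_char[OF n] by auto
    have q: "qmap n (drop n x) \<in> Pcf n" using qmap_img[of n] c(3) by blast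
    have ql: "qmap n (drop n x) ! (n-1) = n - 1 - x!n"
      using qmap_last[OF c(3) n] c(1) n by simp
    have "\<forall>j<n. drop n x ! j + j + 1 \<le> n" using c(3) by (simp add: Mset_def)
    moreover have "0 < n" using n by simp
    ultimately have "drop n x ! 0 + 0 + 1 \<le> n" by blast
    then have m0: "x!n + 1 \<le> n" using c(1) by simp
    have "take n x ! (n-1) = x!(n-1)" using n by simp
    then show "?f x \<in> {(p, q). p \<in> Pcf n \<and> q \<in> Pcf n \<and> p!(n-1) + q!(n-1) \<le> n}"
      using c(2,4) q ql m0 by simp
  next
    fix pq assume pq: "pq \<in> {(p, q). p \<in> Pcf n \<and> q \<in> Pcf n \<and> p!(n-1) + q!(n-1) \<le> n}"
    obtain p q where pq': "pq = (p, q)" "p \<in> Pcf n" "q \<in> Pcf n" "p!(n-1) + q!(n-1) \<le> n" using pq by blast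
    obtain m where m: "m \<in> Mset n" "qmap n m = q" using qmap_img[of n] pq'(3) by (metis imageE)
    have lp: "length p = n" using pq'(2) by (simp add: Pcf_def)
    have lm: "length m = n" using m(1) by (simp add: Mset_def)
    let ?x = "p @ m"
    have t: "take n ?x = p" "drop n ?x = m" using lp by auto
    have x1: "?x!(n-1) = p!(n-1)" using lp n by (simp add: nth_append)
    have x2: "?x!n = m!0" using lp by (simp add: nth_append)
    have ql: "q!(n-1) = n - 1 - m!0" using qmap_last[OF m(1) n] m(2) by simp
    have "\<forall>j<n. m ! j + j + 1 \<le> n" using m(1) by (simp add: Mset_def)
    moreover have "0 < n" using n by simp
    ultimately have "m ! 0 + 0 + 1 \<le> n" by blast
    then have m0: "m!0 + 1 \<le> n" by simp
    have "?x \<in> LR n" unfolding LR_char[OF n] using t x1 x2 lp lm pq'(2,4) m(1) ql m0 by simp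
    moreover have "?f ?x = pq" using t m(2) pq'(1) by simp
    ultimately show "\<exists>x\<in>LR n. pq = ?f x" by metis
  qed
qed

lemma card_PC:
  assumes n: "n \<ge> 1"
  shows "card (PC_coprod_first n) = card (LR n)"
proof -
  have "bij_betw (buildE n) (LR n) (PC_coprod_first n)"
  proof (rule bij_betwI')
    fix x y assume x: "x \<in> LR n" and y: "y \<in> LR n"
    show "(buildE n x = buildE n y) = (x = y)"
      using ps_recover[OF n x] ps_recover[OF n y] by metis
  next
    fix x assume "x \<in> LR n"
    then show "buildE n x \<in> PC_coprod_first n" using bE_in[OF n] by simp
  next
    fix E assume "E \<in> PC_coprod_first n"
    then have EP: "is_PC_prograph n (\<lambda>v. v \<le> n) E" and CL: "canonically_labelled n (\<lambda>v. v \<le> n) E"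
      by (auto simp: PC_coprod_first_def)
    show "\<exists>x\<in>LR n. E = buildE n x"
      using psE_LR[OF n EP CL] E_eq[OF n EP CL] by blast
  qed
  then show ?thesis using bij_betw_same_card by metis
qed

lemma card_PC_sum:
  assumes n: "n \<ge> 1"
  shows "int (card (PC_coprod_first n)) = (\<Sum>(d1, d2) \<in> {(d1 :: nat, d2 :: nat). d1 + d2 \<le> n}. Cb (n - 1) d1 * Cb (n - 1) d2)"
proof -
  have "card (PC_coprod_first n) = (\<Sum>(d1, d2) \<in> {(d1 :: nat, d2 :: nat). d1 + d2 \<le> n}. Np n d1 * Np n d2)"
    unfolding card_PC[OF n] card_LR[OF n] Np_def
    by (rule card_pairs) (simp_all add: finite_Pcf)
  then have "int (card (PC_coprod_first n)) = (\<Sum>(d1, d2) \<in> {(d1 :: nat, d2 :: nat). d1 + d2 \<le> n}. int (Np n d1) * int (Np n d2))"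
    by (simp add: of_nat_sum case_prod_beta)
  also have "\<dots> = (\<Sum>(d1, d2) \<in> {(d1 :: nat, d2 :: nat). d1 + d2 \<le> n}. Cb (n - 1) d1 * Cb (n - 1) d2)"
  proof (rule sum.cong)
    fix d assume d: "d \<in> {(d1 :: nat, d2 :: nat). d1 + d2 \<le> n}"
    have nn: "Suc (n - 1) = n" using n by simp
    have "int (Np n k) = Cb (n-1) k" if "k \<le> n" for k
      using Np_Cb[of k "n-1"] that unfolding nn by simp
    then show "(case d of (d1, d2) \<Rightarrow> int (Np n d1) * int (Np n d2)) = (case d of (d1, d2) \<Rightarrow> Cb (n - 1) d1 * Cb (n - 1) d2)"
      using d by auto
  qed simp
  finally show ?thesis .
qed

lemma card_trees_sum:
  assumes n: "n \<ge> 1"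
  shows "int (card {(T1 :: unit tree, T2 :: unit tree). size T1 = n \<and> size T2 = n \<and> dg T1 + dg T2 \<le> n})
     = (\<Sum>(d1, d2) \<in> {(d1 :: nat, d2 :: nat). d1 + d2 \<le> n}. Cb (n - 1) d1 * Cb (n - 1) d2)"
proof -
  have e: "{(T1 :: unit tree, T2 :: unit tree). size T1 = n \<and> size T2 = n \<and> dg T1 + dg T2 \<le> n}
      = {(x, y). x \<in> {t. size t = n} \<and> y \<in> {t. size t = n} \<and> dg x + dg y \<le> n}" by auto
  have "card {(T1 :: unit tree, T2 :: unit tree). size T1 = n \<and> size T2 = n \<and> dg T1 + dg T2 \<le> n}
     = (\<Sum>(d1, d2) \<in> {(d1 :: nat, d2 :: nat). d1 + d2 \<le> n}. Nt n d1 * Nt n d2)"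
    unfolding e Nt_def
  proof -
    have "card {(x, y). x \<in> {t :: unit tree. size t = n} \<and> y \<in> {t :: unit tree. size t = n} \<and> dg x + dg y \<le> n}
       = (\<Sum>(d1, d2) \<in> {(d1 :: nat, d2 :: nat). d1 + d2 \<le> n}. card {x \<in> {t :: unit tree. size t = n}. dg x = d1} * card {y \<in> {t :: unit tree. size t = n}. dg y = d2})"
      by (rule card_pairs) (simp_all add: finite_trees)
    moreover have "\<And>d. {x \<in> {t :: unit tree. size t = n}. dg x = d} = {t. size t = n \<and> dg t = d}" by auto
    ultimately show "card {(x, y). x \<in> {t :: unit tree. size t = n} \<and> y \<in> {t :: unit tree. size t = n} \<and> dg x + dg y \<le> n}
       = (\<Sum>(d1, d2) \<in> {(d1 :: nat, d2 :: nat). d1 + d2 \<le> n}. card {t :: unit tree. size t = n \<and> dg t = d1} * card {t :: unit tree. size t = n \<and> dg t = d2})"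
      by simp
  qed
  then have "int (card {(T1 :: unit tree, T2 :: unit tree). size T1 = n \<and> size T2 = n \<and> dg T1 + dg T2 \<le> n}) = (\<Sum>(d1, d2) \<in> {(d1 :: nat, d2 :: nat). d1 + d2 \<le> n}. int (Nt n d1) * int (Nt n d2))"
    by (simp add: of_nat_sum case_prod_beta)
  also have "\<dots> = (\<Sum>(d1, d2) \<in> {(d1 :: nat, d2 :: nat). d1 + d2 \<le> n}. Cb (n - 1) d1 * Cb (n - 1) d2)"
  proof (rule sum.cong)
    fix d assume d: "d \<in> {(d1 :: nat, d2 :: nat). d1 + d2 \<le> n}"
    have nn: "Suc (n - 1) = n" using n by simp
    have "int (Nt n k) = Cb (n-1) k" if "k \<le> n" for k
      using Nt_Cb[of k "n-1"] that unfolding nn by simp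
    then show "(case d of (d1, d2) \<Rightarrow> int (Nt n d1) * int (Nt n d2)) = (case d of (d1, d2) \<Rightarrow> Cb (n - 1) d1 * Cb (n - 1) d2)"
      using d by auto
  qed simp
  finally show ?thesis .
qed

theorem mainTheorem3:
  fixes n :: nat
  assumes "n \<ge> 1"
  shows "card (PC_coprod_first n) =
           card {(T1 :: unit tree, T2 :: unit tree). size T1 = n \<and> size T2 = n \<and> dg T1 + dg T2 \<le> n}
       \<and> int (card {(T1 :: unit tree, T2 :: unit tree). size T1 = n \<and> size T2 = n \<and> dg T1 + dg T2 \<le> n})
           = (\<Sum>(d1, d2) \<in> {(d1 :: nat, d2 :: nat). d1 + d2 \<le> n}. Cb (n - 1) d1 * Cb (n - 1) d2)
       \<and> (\<Sum>(d1, d2) \<in> {(d1 :: nat, d2 :: nat). d1 + d2 \<le> n}. Cb (n - 1) d1 * Cb (n - 1) d2)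
           = int ((3*n) choose n) - 2 * int ((3*n) choose (n - 1))
             + (if n \<ge> 2 then int ((3*n) choose (n - 2)) else 0)"
proof (intro conjI)
  show "card (PC_coprod_first n) =
           card {(T1 :: unit tree, T2 :: unit tree). size T1 = n \<and> size T2 = n \<and> dg T1 + dg T2 \<le> n}"
    using card_PC_sum[OF assms] card_trees_sum[OF assms] by linarith
  show "int (card {(T1 :: unit tree, T2 :: unit tree). size T1 = n \<and> size T2 = n \<and> dg T1 + dg T2 \<le> n})
           = (\<Sum>(d1, d2) \<in> {(d1 :: nat, d2 :: nat). d1 + d2 \<le> n}. Cb (n - 1) d1 * Cb (n - 1) d2)"
    by (rule card_trees_sum[OF assms])
  show "(\<Sum>(d1, d2) \<in> {(d1 :: nat, d2 :: nat). d1 + d2 \<le> n}. Cb (n - 1) d1 * Cb (n - 1) d2)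
           = int ((3*n) choose n) - 2 * int ((3*n) choose (n - 1))
             + (if n \<ge> 2 then int ((3*n) choose (n - 2)) else 0)"
    by (rule partC[OF assms])
qed


end
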